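(* Let $\mathscr M$ be a type $II_1$ factor and $n\in\mathbb N$. On $M_n(\mathscr M)$, the topology $\mathcal P$ (the product topology obtained by viewing $M_n(\mathscr M)$ as $\mathscr M\times\cdots\times\mathscr M$ ($n^2$ factors), each factor carrying the measure topology of $\mathscr M$) and the topology $\mathcal T$ (the measure topology of the $II_1$ factor $M_n(\mathscr M)$) are equivalent.
   Context: For a $II_1$ factor $\mathscr N$ with unique faithful normal tracial state $\tau_{\mathscr N}$ and $\varepsilon,\delta>0$, $\mathcal O_{\tau_{\mathscr N}}(\varepsilon,\delta)$ is the set of $A\in\mathscr N$ for which some projection $E\in\mathscr N$ satisfies $\|AE\|\le\varepsilon$ and $\tau_{\mathscr N}(I-E)\le\delta$; the measure topology on $\mathscr N$ is the translation-invariant topology with these sets as a fundamental system of neighborhoods of $0$. Here $\mathscr M$ has trace $\tau$, and $M_n(\mathscr M)$ acts on $\oplus_{i=1}^n\mathscr H$ by matrix action, with normalized trace $\tau_n(\mathbf A)=\frac1n\sum_i\tau(A_{ii})$. *)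

theory Defs
  imports "HOL-Analysis.Analysis"
begin

text \<open>A complex Hilbert space H is represented by a real Hilbert space (type class
  real_inner + complete_space) together with an operator J (multiplication by i) with
  J o J = -I and J orthogonal.  The complex inner product is then
  <x,y>_C = x.y + i (x.(J y))  and complex scalar multiplication is (a+ib)x = a x + b J x.\<close>

definition complex_structure :: "('h::{real_inner,complete_space}) \<Rightarrow>\<^sub>L 'h \<Rightarrow> bool" where
  "complex_structure J \<longleftrightarrow> J o\<^sub>L J = - id_blinfun \<and> (\<forall>x y. inner (J x) (J y) = inner x y)"

text \<open>B(H): bounded complex-linear operators = bounded real-linear operators commuting with J.\<close>
definition cplx_ops :: "('h::{real_inner,complete_space}) \<Rightarrow>\<^sub>L 'h \<Rightarrow> ('h \<Rightarrow>\<^sub>L 'h) set" where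
  "cplx_ops J = {T. T o\<^sub>L J = J o\<^sub>L T}"

definition cscale :: "('h::{real_inner,complete_space}) \<Rightarrow>\<^sub>L 'h \<Rightarrow> complex \<Rightarrow> ('h \<Rightarrow>\<^sub>L 'h) \<Rightarrow> ('h \<Rightarrow>\<^sub>L 'h)" where
  "cscale J c T = Re c *\<^sub>R T + Im c *\<^sub>R (J o\<^sub>L T)"

definition adj :: "('h::{real_inner,complete_space}) \<Rightarrow>\<^sub>L 'h \<Rightarrow> 'h \<Rightarrow>\<^sub>L 'h" where
  "adj T = Blinfun (adjoint (blinfun_apply T))"

definition commutant :: "('h::{real_inner,complete_space}) \<Rightarrow>\<^sub>L 'h \<Rightarrow> ('h \<Rightarrow>\<^sub>L 'h) set \<Rightarrow> ('h \<Rightarrow>\<^sub>L 'h) set" where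
  "commutant J S = {T \<in> cplx_ops J. \<forall>A\<in>S. T o\<^sub>L A = A o\<^sub>L T}"

definition von_neumann_algebra :: "('h::{real_inner,complete_space}) \<Rightarrow>\<^sub>L 'h \<Rightarrow> ('h \<Rightarrow>\<^sub>L 'h) set \<Rightarrow> bool" where
  "von_neumann_algebra J M \<longleftrightarrow>
     M \<subseteq> cplx_ops J \<and> id_blinfun \<in> M \<and>
     (\<forall>A\<in>M. \<forall>B\<in>M. A + B \<in> M \<and> A o\<^sub>L B \<in> M) \<and>
     (\<forall>c. \<forall>A\<in>M. cscale J c A \<in> M) \<and>
     (\<forall>A\<in>M. adj A \<in> M) \<and>
     commutant J (commutant J M) = M"

definition factor :: "('h::{real_inner,complete_space}) \<Rightarrow>\<^sub>L 'h \<Rightarrow> ('h \<Rightarrow>\<^sub>L 'h) set \<Rightarrow> bool" where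
  "factor J M \<longleftrightarrow> von_neumann_algebra J M \<and>
     M \<inter> commutant J M = {cscale J c id_blinfun | c. True}"

definition pos_op :: "('h::{real_inner,complete_space}) \<Rightarrow>\<^sub>L 'h \<Rightarrow> bool" where
  "pos_op T \<longleftrightarrow> adj T = T \<and> (\<forall>x. 0 \<le> inner (T x) x)"

definition op_le :: "('h::{real_inner,complete_space}) \<Rightarrow>\<^sub>L 'h \<Rightarrow> 'h \<Rightarrow>\<^sub>L 'h \<Rightarrow> bool" where
  "op_le A B \<longleftrightarrow> pos_op (B - A)"

definition is_proj :: "('h::{real_inner,complete_space}) \<Rightarrow>\<^sub>L 'h \<Rightarrow> bool" where
  "is_proj E \<longleftrightarrow> E o\<^sub>L E = E \<and> adj E = E"

definition faithful_normal_tracial_state ::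
  "('h::{real_inner,complete_space}) \<Rightarrow>\<^sub>L 'h \<Rightarrow> ('h \<Rightarrow>\<^sub>L 'h) set \<Rightarrow> (('h \<Rightarrow>\<^sub>L 'h) \<Rightarrow> complex) \<Rightarrow> bool" where
  "faithful_normal_tracial_state J M \<tau> \<longleftrightarrow>
     (\<forall>A\<in>M. \<forall>B\<in>M. \<tau> (A + B) = \<tau> A + \<tau> B) \<and>
     (\<forall>c. \<forall>A\<in>M. \<tau> (cscale J c A) = c * \<tau> A) \<and>
     (\<forall>A\<in>M. pos_op A \<longrightarrow> Im (\<tau> A) = 0 \<and> 0 \<le> Re (\<tau> A)) \<and>
     \<tau> id_blinfun = 1 \<and>
     (\<forall>A\<in>M. \<forall>B\<in>M. \<tau> (A o\<^sub>L B) = \<tau> (B o\<^sub>L A)) \<and>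
     (\<forall>A\<in>M. pos_op A \<and> \<tau> A = 0 \<longrightarrow> A = 0) \<and>
     (\<forall>S A. S \<noteq> {} \<and> S \<subseteq> M \<and> (\<forall>B\<in>S. pos_op B) \<and>
            (\<forall>B\<in>S. \<forall>C\<in>S. \<exists>D\<in>S. op_le B D \<and> op_le C D) \<and>
            A \<in> M \<and> adj A = A \<and> (\<forall>B\<in>S. op_le B A) \<and>
            (\<forall>A'\<in>M. adj A' = A' \<and> (\<forall>B\<in>S. op_le B A') \<longrightarrow> op_le A A')
        \<longrightarrow> Re (\<tau> A) = (SUP B\<in>S. Re (\<tau> B)))"

definition II1_factor :: "('h::{real_inner,complete_space}) \<Rightarrow>\<^sub>L 'h \<Rightarrow> ('h \<Rightarrow>\<^sub>L 'h) set \<Rightarrow> bool" where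
  "II1_factor J M \<longleftrightarrow> complex_structure J \<and> factor J M \<and>
     \<not> (\<exists>B. finite B \<and> M \<subseteq> span B) \<and>
     (\<exists>\<tau>. faithful_normal_tracial_state J M \<tau>)"

definition meas_nbhd ::
  "('h::{real_inner,complete_space} \<Rightarrow>\<^sub>L 'h) set \<Rightarrow> (('h \<Rightarrow>\<^sub>L 'h) \<Rightarrow> complex) \<Rightarrow> real \<Rightarrow> real \<Rightarrow> ('h \<Rightarrow>\<^sub>L 'h) set" where
  "meas_nbhd M \<tau> \<epsilon> \<delta> = {A\<in>M. \<exists>E\<in>M. is_proj E \<and> norm (A o\<^sub>L E) \<le> \<epsilon> \<and> Re (\<tau> (id_blinfun - E)) \<le> \<delta>}"

definition meas_topology ::
  "('h::{real_inner,complete_space} \<Rightarrow>\<^sub>L 'h) set \<Rightarrow> (('h \<Rightarrow>\<^sub>L 'h) \<Rightarrow> complex) \<Rightarrow> ('h \<Rightarrow>\<^sub>L 'h) topology" where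
  "meas_topology M \<tau> = topology (\<lambda>U. U \<subseteq> M \<and>
      (\<forall>A\<in>U. \<exists>\<epsilon>>0. \<exists>\<delta>>0. (\<lambda>B. A + B) ` meas_nbhd M \<tau> \<epsilon> \<delta> \<subseteq> U))"

text \<open>The index set {1..n} is a finite type 'n (n = CARD('n)); matrices are functions on 'n x 'n,
  vectors of the direct sum are functions 'n => 'h.\<close>

type_synonym ('n, 'h) opmat = "'n \<times> 'n \<Rightarrow> ('h \<Rightarrow>\<^sub>L 'h)"

definition mat_alg :: "('h::{real_inner,complete_space} \<Rightarrow>\<^sub>L 'h) set \<Rightarrow> ('n::finite, 'h) opmat set" where
  "mat_alg M = {A. \<forall>ij. A ij \<in> M}"

definition dsum_norm :: "('n::finite \<Rightarrow> 'h::{real_inner,complete_space}) \<Rightarrow> real" where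
  "dsum_norm x = sqrt (\<Sum>i\<in>UNIV. (norm (x i))\<^sup>2)"

definition mat_apply :: "('n::finite, 'h::{real_inner,complete_space}) opmat \<Rightarrow> ('n \<Rightarrow> 'h) \<Rightarrow> ('n \<Rightarrow> 'h)" where
  "mat_apply A x = (\<lambda>i. \<Sum>j\<in>UNIV. A (i, j) (x j))"

definition mat_norm :: "('n::finite, 'h::{real_inner,complete_space}) opmat \<Rightarrow> real" where
  "mat_norm A = Sup {dsum_norm (mat_apply A x) | x. dsum_norm x \<le> 1}"

definition mat_mult :: "('n::finite, 'h::{real_inner,complete_space}) opmat \<Rightarrow> ('n, 'h) opmat \<Rightarrow> ('n, 'h) opmat" where
  "mat_mult A B = (\<lambda>(i, k). \<Sum>j\<in>UNIV. A (i, j) o\<^sub>L B (j, k))"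

definition mat_adj :: "('n::finite, 'h::{real_inner,complete_space}) opmat \<Rightarrow> ('n, 'h) opmat" where
  "mat_adj A = (\<lambda>(i, j). adj (A (j, i)))"

definition mat_id :: "('n::finite, 'h::{real_inner,complete_space}) opmat" where
  "mat_id = (\<lambda>(i, j). if i = j then id_blinfun else 0)"

definition mat_is_proj :: "('n::finite, 'h::{real_inner,complete_space}) opmat \<Rightarrow> bool" where
  "mat_is_proj E \<longleftrightarrow> mat_mult E E = E \<and> mat_adj E = E"

definition mat_trace :: "(('h::{real_inner,complete_space} \<Rightarrow>\<^sub>L 'h) \<Rightarrow> complex) \<Rightarrow> ('n::finite, 'h) opmat \<Rightarrow> complex" where
  "mat_trace \<tau> A = (\<Sum>i\<in>UNIV. \<tau> (A (i, i))) / of_nat CARD('n)"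

definition mat_meas_nbhd ::
  "('h::{real_inner,complete_space} \<Rightarrow>\<^sub>L 'h) set \<Rightarrow> (('h \<Rightarrow>\<^sub>L 'h) \<Rightarrow> complex) \<Rightarrow> real \<Rightarrow> real \<Rightarrow> ('n::finite, 'h) opmat set" where
  "mat_meas_nbhd M \<tau> \<epsilon> \<delta> = {A\<in>mat_alg M. \<exists>E\<in>mat_alg M. mat_is_proj E \<and>
      mat_norm (mat_mult A E) \<le> \<epsilon> \<and> Re (mat_trace \<tau> (\<lambda>ij. mat_id ij - E ij)) \<le> \<delta>}"

definition mat_meas_topology ::
  "('h::{real_inner,complete_space} \<Rightarrow>\<^sub>L 'h) set \<Rightarrow> (('h \<Rightarrow>\<^sub>L 'h) \<Rightarrow> complex) \<Rightarrow> ('n::finite, 'h) opmat topology" where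
  "mat_meas_topology M \<tau> = topology (\<lambda>U. U \<subseteq> mat_alg M \<and>
      (\<forall>A\<in>U. \<exists>\<epsilon>>0. \<exists>\<delta>>0. (\<lambda>B ij. A ij + B ij) ` mat_meas_nbhd M \<tau> \<epsilon> \<delta> \<subseteq> U))"

end

theory Submission
  imports Defs
begin

lemma near_min:
  fixes x :: "'a::real_normed_vector"
  assumes "A \<noteq> {}" "e > 0"
  shows "\<exists>a\<in>A. dist x a < infdist x A + e"
proof -
  have "infdist x A < infdist x A + e" using assms by simp
  then show ?thesis unfolding infdist_notempty[OF assms(1)]
    using cInf_lessD[of "dist x ` A"] assms(1) by auto
qed

lemma parallelogram:
  fixes a b :: "'a::real_inner"
  shows "norm (a - b)^2 + norm (a + b)^2 = 2 * norm a ^2 + 2 * norm b ^2"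
  by (simp add: power2_norm_eq_inner inner_diff inner_add algebra_simps inner_commute)

lemma orth_from_min:
  fixes x y w :: "'a::real_inner"
  assumes "\<And>t::real. norm (x - y) \<le> norm (x - y - t *\<^sub>R w)"
  shows "inner (x - y) w = 0"
proof -
  define c where "c = inner (x - y) w"
  define q where "q = inner w w"
  have q0: "q \<ge> 0" unfolding q_def by simp
  have "\<And>t::real. 2 * t * c \<le> t * t * q"
  proof -
    fix t :: real
    have "norm (x - y)^2 \<le> norm (x - y - t *\<^sub>R w)^2"
      using assms[of t] by (simp add: power_mono)
    then show "2 * t * c \<le> t * t * q"
      by (simp add: power2_norm_eq_inner inner_diff c_def q_def algebra_simps inner_commute)
  qed
  define t where "t = c / (q + 1)"
  have tq: "t * (q + 1) = c" unfolding t_def using q0 by simp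
  have "(q+1)*(q+1) * (2 * t * c) \<le> (q+1)*(q+1) * (t * t * q)"
    using \<open>\<And>t. 2 * t * c \<le> t * t * q\<close>[of t] q0 by (intro mult_left_mono) auto
  also have "(q+1)*(q+1) * (t * t * q) = (t * (q+1)) * (t * (q+1)) * q" by (simp only: mult_ac)
  also have "\<dots> = c * c * q" using tq by simp
  also have "(q+1)*(q+1) * (2 * t * c) = 2 * (t * (q+1)) * c * (q + 1)" by (simp only: mult_ac)
  also have "\<dots> = 2 * c * c * (q + 1)" using tq by simp
  finally have "2 * c * c * (q+1) \<le> c * c * q" .
  then have "c * c * (q + 2) \<le> 0" by (simp add: algebra_simps)
  moreover have "c * c \<ge> 0" by simp
  ultimately have "c * c = 0" using q0
    by (metis add_nonneg_pos mult_le_0_iff order_antisym_conv zero_less_numeral not_le)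
  then show ?thesis unfolding c_def by simp
qed

lemma proj_exists:
  fixes V :: "'a::{real_inner,complete_space} set"
  assumes sV: "subspace V" and cV: "closed V"
  shows "\<exists>y\<in>V. \<forall>w\<in>V. inner (x - y) w = 0"
proof -
  define d where "d = infdist x V"
  have ne: "V \<noteq> {}" using subspace_0[OF sV] by auto
  have d0: "d \<ge> 0" unfolding d_def by (rule infdist_nonneg)
  have "\<forall>n::nat. \<exists>a\<in>V. dist x a < d + 1 / Suc n"
    using near_min[OF ne] unfolding d_def by simp
  then obtain v where v: "\<And>n. v n \<in> V" "\<And>n. dist x (v n) < d + 1 / Suc n"
    by metis
  have key: "norm (v n - v m)^2 \<le> 2 * (2*d+1) * (1 / Suc n + 1 / Suc m)" for n m
  proof -
    define a where "a = x - v n"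
    define b where "b = x - v m"
    define c where "c = (1/2) *\<^sub>R (v n + v m)"
    have cV: "c \<in> V" unfolding c_def using v(1) sV by (simp add: subspace_add subspace_scale)
    have "a + b = 2 *\<^sub>R (x - c)" unfolding a_def b_def c_def by (simp add: algebra_simps scaleR_2)
    then have nab: "norm (a + b) = 2 * norm (x - c)" by simp
    have "d \<le> norm (x - c)" unfolding d_def using infdist_le[OF cV, of x] by (simp add: dist_norm)
    then have "2 * d \<le> norm (a + b)" using nab by simp
    then have "(2 * d)^2 \<le> norm (a + b)^2" using d0 by (intro power_mono) auto
    then have s1: "4 * d^2 \<le> norm (a + b)^2" by (simp add: power_mult_distrib)
    have tn: "0 < 1 / real (Suc n)" "1 / real (Suc n) \<le> 1" by auto
    have tm: "0 < 1 / real (Suc m)" "1 / real (Suc m) \<le> 1" by auto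
    have an: "norm a < d + 1 / Suc n" using v(2)[of n] unfolding a_def by (simp add: dist_norm)
    have bm: "norm b < d + 1 / Suc m" using v(2)[of m] unfolding b_def by (simp add: dist_norm)
    have an2: "norm a ^2 \<le> d^2 + (2*d+1) * (1 / Suc n)"
    proof -
      have "norm a ^2 \<le> (d + 1 / Suc n)^2" using an by (simp add: power_mono)
      also have "\<dots> = d^2 + (2*d + 1 / Suc n) * (1 / Suc n)" by (simp add: power2_eq_square algebra_simps)
      also have "\<dots> \<le> d^2 + (2*d+1) * (1 / Suc n)" using tn d0 by (intro add_left_mono mult_right_mono) auto
      finally show ?thesis .
    qed
    have bm2: "norm b ^2 \<le> d^2 + (2*d+1) * (1 / Suc m)"
    proof -
      have "norm b ^2 \<le> (d + 1 / Suc m)^2" using bm by (simp add: power_mono)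
      also have "\<dots> = d^2 + (2*d + 1 / Suc m) * (1 / Suc m)" by (simp add: power2_eq_square algebra_simps)
      also have "\<dots> \<le> d^2 + (2*d+1) * (1 / Suc m)" using tm d0 by (intro add_left_mono mult_right_mono) auto
      finally show ?thesis .
    qed
    have "v n - v m = b - a" unfolding a_def b_def by simp
    then have "norm (v n - v m)^2 = norm (a - b)^2" by (simp add: norm_minus_commute)
    also have "\<dots> = 2 * norm a ^2 + 2 * norm b ^2 - norm (a + b)^2" using parallelogram[of a b] by simp
    also have "\<dots> \<le> 2*(d^2 + (2*d+1)*(1/Suc n)) + 2*(d^2 + (2*d+1)*(1/Suc m)) - 4*d^2"
    proof -
      define P where "P = (2*d+1)*(1/real (Suc n))"
      define Q where "Q = (2*d+1)*(1/real (Suc m))"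
      define A where "A = norm a ^ 2"
      define B where "B = norm b ^ 2"
      define C where "C = norm (a + b) ^ 2"
      define D where "D = d^2"
      have "A \<le> D + P" "B \<le> D + Q" "4 * D \<le> C" using an2 bm2 s1 unfolding P_def Q_def A_def B_def C_def D_def by auto
      then have "2 * A + 2 * B - C \<le> 2 * (D + P) + 2 * (D + Q) - 4 * D" by simp
      then show ?thesis unfolding P_def Q_def A_def B_def C_def D_def .
    qed
    also have "\<dots> = 2 * (2*d+1) * (1 / Suc n + 1 / Suc m)" by (simp add: algebra_simps)
    finally show ?thesis .
  qed
  have "Cauchy v"
  proof (rule metric_CauchyI)
    fix e :: real assume e: "e > 0"
    obtain N :: nat where N: "4 * (2*d+1) / e^2 < N" using reals_Archimedean2 by blast
    have "0 < 4 * (2*d+1) / e^2" using d0 e by simp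
    then have Npos: "N > 0" using N by linarith
    have "4 * (2*d+1) < e^2 * N" using N e by (simp add: field_simps)
    show "\<exists>M. \<forall>m\<ge>M. \<forall>n\<ge>M. dist (v m) (v n) < e"
    proof (intro exI allI impI)
      fix m n assume mN: "m \<ge> N" and nN: "n \<ge> N"
      have "1 / real (Suc m) \<le> 1 / N" using mN Npos by (simp add: frac_le)
      moreover have "1 / real (Suc n) \<le> 1 / N" using nN Npos by (simp add: frac_le)
      ultimately have "1 / real (Suc m) + 1 / real (Suc n) \<le> 2 / N" by simp
      then have "2 * (2*d+1) * (1 / real (Suc m) + 1 / real (Suc n)) \<le> 2 * (2*d+1) * (2 / N)"
        using d0 by (intro mult_left_mono) auto
      then have "norm (v m - v n)^2 \<le> 2 * (2*d+1) * (2 / N)"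
        using key[of m n] by linarith
      also have "\<dots> < e^2" using \<open>4 * (2*d+1) < e^2 * N\<close> Npos by (simp add: field_simps)
      finally have "norm (v m - v n)^2 < e^2" .
      then have "norm (v m - v n) < e" using e by (simp add: power_less_imp_less_base)
      then show "dist (v m) (v n) < e" by (simp add: dist_norm)
    qed
  qed
  then obtain y where y: "v \<longlonglongrightarrow> y" using convergent_eq_Cauchy by blast
  have yV: "y \<in> V" using closed_sequentially[OF cV] v(1) y by blast
  have "dist x y \<le> d"
  proof (rule LIMSEQ_le[of "\<lambda>n. dist x (v n)" _ "\<lambda>n. d + 1 / Suc n"])
    show "(\<lambda>n. dist x (v n)) \<longlonglongrightarrow> dist x y" using y by (intro tendsto_intros)
    show "(\<lambda>n. d + 1 / real (Suc n)) \<longlonglongrightarrow> d"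
      using tendsto_add[OF tendsto_const LIMSEQ_Suc[OF lim_inverse_n']] by simp
    show "\<exists>N. \<forall>n\<ge>N. dist x (v n) \<le> d + 1 / real (Suc n)" using v(2) less_imp_le by blast
  qed
  have "inner (x - y) w = 0" if wV: "w \<in> V" for w
  proof (rule orth_from_min)
    fix t :: real
    have "y + t *\<^sub>R w \<in> V" using sV yV wV by (simp add: subspace_add subspace_scale)
    then have "d \<le> dist x (y + t *\<^sub>R w)" unfolding d_def by (rule infdist_le)
    then show "norm (x - y) \<le> norm (x - y - t *\<^sub>R w)" using \<open>dist x y \<le> d\<close>
      by (simp add: dist_norm algebra_simps)
  qed
  then show ?thesis using yV by blast
qed

definition oproj :: "'a::{real_inner,complete_space} set \<Rightarrow> 'a \<Rightarrow> 'a" where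
  "oproj V x = (SOME y. y \<in> V \<and> (\<forall>w\<in>V. inner (x - y) w = 0))"

context
  fixes V :: "'a::{real_inner,complete_space} set"
  assumes sV: "subspace V" and cV: "closed V"
begin

lemma oproj_prop: "oproj V x \<in> V" "\<And>w. w \<in> V \<Longrightarrow> inner (x - oproj V x) w = 0"
proof -
  have "\<exists>y. y \<in> V \<and> (\<forall>w\<in>V. inner (x - y) w = 0)" using proj_exists[OF sV cV] by blast
  then have "oproj V x \<in> V \<and> (\<forall>w\<in>V. inner (x - oproj V x) w = 0)"
    unfolding oproj_def by (rule someI_ex)
  then show "oproj V x \<in> V" "\<And>w. w \<in> V \<Longrightarrow> inner (x - oproj V x) w = 0" by auto
qed

lemma oproj_unique:
  assumes "y \<in> V" "\<And>w. w \<in> V \<Longrightarrow> inner (x - y) w = 0"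
  shows "oproj V x = y"
proof -
  define p where "p = oproj V x"
  have "y - p \<in> V" unfolding p_def using assms(1) oproj_prop(1) sV by (simp add: subspace_diff)
  then have "inner (x - p) (y - p) = 0" "inner (x - y) (y - p) = 0"
    using oproj_prop(2) assms(2) unfolding p_def by auto
  then have "inner (y - p) (y - p) = 0" by (simp add: inner_diff algebra_simps)
  then show ?thesis unfolding p_def by simp
qed

lemma oproj_id: "x \<in> V \<Longrightarrow> oproj V x = x"
  by (rule oproj_unique) auto

lemma oproj_zero: "(\<And>w. w \<in> V \<Longrightarrow> inner x w = 0) \<Longrightarrow> oproj V x = 0"
  by (rule oproj_unique) (auto simp: subspace_0[OF sV])

lemma oproj_add: "oproj V (x + y) = oproj V x + oproj V y"
proof (rule oproj_unique)
  show "oproj V x + oproj V y \<in> V" using oproj_prop(1) sV by (simp add: subspace_add)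
  fix w assume "w \<in> V"
  then have "inner (x - oproj V x) w + inner (y - oproj V y) w = 0" using oproj_prop(2) by simp
  moreover have "x + y - (oproj V x + oproj V y) = (x - oproj V x) + (y - oproj V y)" by simp
  ultimately show "inner (x + y - (oproj V x + oproj V y)) w = 0" by (simp only: inner_add_left)
qed

lemma oproj_scale: "oproj V (c *\<^sub>R x) = c *\<^sub>R oproj V x"
proof (rule oproj_unique)
  show "c *\<^sub>R oproj V x \<in> V" using oproj_prop(1) sV by (simp add: subspace_scale)
  fix w assume "w \<in> V"
  then have "c * inner (x - oproj V x) w = 0" using oproj_prop(2) by simp
  moreover have "c *\<^sub>R x - c *\<^sub>R oproj V x = c *\<^sub>R (x - oproj V x)" by (simp add: scaleR_right_diff_distrib)
  ultimately show "inner (c *\<^sub>R x - c *\<^sub>R oproj V x) w = 0" by (simp only: inner_scaleR_left)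
qed

lemma oproj_norm_sq: "norm x ^ 2 = norm (oproj V x) ^ 2 + norm (x - oproj V x) ^ 2"
proof -
  have o: "inner (x - oproj V x) (oproj V x) = 0" using oproj_prop by auto
  have "x = oproj V x + (x - oproj V x)" by simp
  then have "norm x ^ 2 = inner (oproj V x + (x - oproj V x)) (oproj V x + (x - oproj V x))"
    by (metis power2_norm_eq_inner)
  also have "\<dots> = inner (oproj V x) (oproj V x) + inner (oproj V x) (x - oproj V x) + inner (x - oproj V x) (oproj V x) + inner (x - oproj V x) (x - oproj V x)"
    by (simp only: inner_add_left inner_add_right add.assoc)
  also have "\<dots> = norm (oproj V x) ^ 2 + norm (x - oproj V x) ^ 2"
    using o by (simp add: power2_norm_eq_inner inner_commute)
  finally show ?thesis .
qed

lemma oproj_norm: "norm (oproj V x) \<le> norm x"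
proof -
  have "norm (oproj V x) ^ 2 \<le> norm x ^ 2" using oproj_norm_sq[of x] by simp
  then show ?thesis by (rule power2_le_imp_le) simp
qed

lemma oproj_bl: "bounded_linear (oproj V)"
  apply (rule bounded_linear_intro[of _ 1])
  using oproj_add oproj_scale oproj_norm by auto

lemma oproj_sym: "inner (oproj V x) y = inner x (oproj V y)"
proof -
  have "inner (oproj V x) y = inner (oproj V x) (oproj V y)"
    using oproj_prop(2)[of "oproj V x" y] oproj_prop(1)[of x]
    by (simp add: inner_diff inner_commute)
  also have "\<dots> = inner x (oproj V y)"
    using oproj_prop(2)[of "oproj V y" x] oproj_prop(1)[of y]
    by (simp add: inner_diff inner_commute)
  finally show ?thesis .
qed

end

lemma riesz:
  fixes f :: "'a::{real_inner,complete_space} \<Rightarrow> real"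
  assumes bf: "bounded_linear f"
  shows "\<exists>z. \<forall>x. f x = inner x z"
proof (cases "\<forall>x. f x = 0")
  case True then show ?thesis by (intro exI[of _ 0]) auto
next
  case False
  then obtain u where u: "f u \<noteq> 0" by auto
  interpret f: bounded_linear f by fact
  define V where "V = {x. f x = 0}"
  have sV: "subspace V" unfolding V_def subspace_def by (auto simp: f.add f.scale f.zero)
  have cV: "closed V" unfolding V_def
    by (intro closed_Collect_eq continuous_intros) (simp add: f.continuous_on continuous_on_id)
  define w where "w = u - oproj V u"
  have fw: "f w = f u" unfolding w_def using oproj_prop(1)[OF sV cV, of u]
    by (simp add: f.diff V_def)
  have wo: "\<And>v. v \<in> V \<Longrightarrow> inner w v = 0" unfolding w_def using oproj_prop(2)[OF sV cV] by auto
  have wn: "inner w w \<noteq> 0" using fw u f.zero by auto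
  show ?thesis
  proof (intro exI allI)
    fix x
    have "x - (f x / f w) *\<^sub>R w \<in> V" unfolding V_def using u fw by (simp add: f.diff f.scale)
    then have "inner w (x - (f x / f w) *\<^sub>R w) = 0" by (rule wo)
    then have "inner x w = (f x / f w) * inner w w" by (simp add: inner_diff inner_commute)
    then show "f x = inner x ((f w / inner w w) *\<^sub>R w)" using wn u fw by (simp add: field_simps)
  qed
qed

lemma adjoint_works_h:
  fixes T :: "'a::{real_inner,complete_space} \<Rightarrow> 'a"
  assumes "bounded_linear T"
  shows "inner (T x) y = inner x (adjoint T y)"
proof -
  have "\<forall>y. \<exists>z. \<forall>x. inner (T x) y = inner x z"
  proof
    fix y
    have "bounded_linear (\<lambda>x. inner (T x) y)"
      using bounded_linear_compose[OF bounded_linear_inner_left assms] by simp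
    then show "\<exists>z. \<forall>x. inner (T x) y = inner x z" using riesz by blast
  qed
  then obtain g where g: "\<And>x y. inner (T x) y = inner x (g y)" by metis
  have "adjoint T = g" by (rule adjoint_unique) (use g in auto)
  then show ?thesis using g by simp
qed

lemma adjoint_bl_h:
  fixes T :: "'a::{real_inner,complete_space} \<Rightarrow> 'a"
  assumes bT: "bounded_linear T"
  shows "bounded_linear (adjoint T)"
proof -
  interpret T: bounded_linear T by fact
  obtain K where K: "\<And>x. norm (T x) \<le> norm x * K" "K > 0" using T.pos_bounded by blast
  let ?S = "adjoint T"
  have aw: "\<And>x y. inner (T x) y = inner x (?S y)" using adjoint_works_h[OF bT] by blast
  have add: "?S (a + b) = ?S a + ?S b" for a b
    using aw by (metis (no_types, lifting) inner_add_right vector_eq_ldot)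
  have sc: "?S (c *\<^sub>R a) = c *\<^sub>R ?S a" for c a
    using aw by (metis (no_types, lifting) inner_scaleR_right vector_eq_ldot)
  have nb: "norm (?S y) \<le> norm y * K" for y
  proof -
    have "norm (?S y) ^ 2 = inner (T (?S y)) y" using aw[of "?S y" y] by (simp add: power2_norm_eq_inner)
    also have "\<dots> \<le> norm (T (?S y)) * norm y" by (rule order_trans[OF _ Cauchy_Schwarz_ineq2]) simp
    also have "\<dots> \<le> norm (?S y) * K * norm y" using K(1)[of "?S y"] by (simp add: mult_right_mono)
    finally have "norm (?S y) ^ 2 \<le> norm (?S y) * (norm y * K)" by (simp add: algebra_simps)
    then show ?thesis
      using K(2) by (cases "norm (?S y) = 0") (auto simp: power2_eq_square)
  qed
  show ?thesis by (rule bounded_linear_intro[of _ K, OF add sc nb])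
qed

context fixes T A B S :: "'a::{real_inner,complete_space} \<Rightarrow>\<^sub>L 'a" begin
lemma adj_apply: "blinfun_apply (adj T) = adjoint (blinfun_apply T)"
  unfolding adj_def by (rule bounded_linear_Blinfun_apply[OF adjoint_bl_h[OF blinfun.bounded_linear_right]])

lemma adj_inner: "inner (T x) y = inner x (adj T y)"
  unfolding adj_apply by (rule adjoint_works_h[OF blinfun.bounded_linear_right])

lemma adj_inner2: "inner (adj T x) y = inner x (T y)"
  by (metis adj_inner inner_commute)

lemma adj_eqI:
  assumes "\<And>x y. inner (T x) y = inner x (S y)"
  shows "adj T = S"
proof -
  have "adjoint (blinfun_apply T) = blinfun_apply S"
    by (rule adjoint_unique) (simp add: assms)
  then show ?thesis by (intro blinfun_eqI) (simp add: adj_apply)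
qed

end
lemma adj_adj[simp]: "adj (adj T) = T"
  by (rule adj_eqI) (rule adj_inner2)

lemma adj_comp: "adj (A o\<^sub>L B) = adj B o\<^sub>L adj A"
  by (rule adj_eqI) (simp add: adj_inner)

lemma adj_add: "adj (A + B) = adj A + adj B"
  by (rule adj_eqI) (simp add: adj_inner blinfun.add_left inner_add)

lemma adj_diff: "adj (A - B) = adj A - adj B"
  by (rule adj_eqI) (simp add: adj_inner blinfun.diff_left inner_diff)

lemma adj_scaleR: "adj (c *\<^sub>R A) = c *\<^sub>R adj A"
  by (rule adj_eqI) (simp add: adj_inner blinfun.scaleR_left)

lemma adj_id[simp]: "adj id_blinfun = id_blinfun"
  by (rule adj_eqI) simp

lemma adj_zero[simp]: "adj 0 = 0"
  by (rule adj_eqI) simp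

lemma comp_assoc_L: "(A o\<^sub>L B) o\<^sub>L C = A o\<^sub>L (B o\<^sub>L C)"
  by (rule blinfun_eqI) simp

lemma comp_id_L[simp]: "A o\<^sub>L id_blinfun = A" "id_blinfun o\<^sub>L A = A"
  by (auto intro: blinfun_eqI)

lemma blinfun_eq_iff_inner:
  fixes A B :: "'a::real_inner \<Rightarrow>\<^sub>L 'a"
  shows "(\<And>x y. inner (A x) y = inner (B x) y) \<Longrightarrow> A = B"
  by (rule blinfun_eqI) (metis vector_eq_rdot)

definition projop :: "'a::{real_inner,complete_space} set \<Rightarrow> 'a \<Rightarrow>\<^sub>L 'a" where
  "projop V = Blinfun (oproj V)"

lemma projop_apply:
  assumes "subspace V" "closed V"
  shows "blinfun_apply (projop V) = oproj V"
  unfolding projop_def using oproj_bl[OF assms] by (rule bounded_linear_Blinfun_apply)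

lemma projop_is_proj:
  assumes "subspace V" "closed V"
  shows "is_proj (projop V)"
  unfolding is_proj_def
proof
  show "projop V o\<^sub>L projop V = projop V"
    by (rule blinfun_eqI) (simp add: projop_apply[OF assms] oproj_id[OF assms] oproj_prop[OF assms])
  show "adj (projop V) = projop V"
    by (rule adj_eqI) (simp add: projop_apply[OF assms] oproj_sym[OF assms])
qed

lemma projop_commute:
  fixes T :: "'a::{real_inner,complete_space} \<Rightarrow>\<^sub>L 'a"
  assumes sV: "subspace V" and cV: "closed V"
    and TV: "\<And>v. v \<in> V \<Longrightarrow> T v \<in> V" and aTV: "\<And>v. v \<in> V \<Longrightarrow> adj T v \<in> V"
  shows "projop V o\<^sub>L T = T o\<^sub>L projop V"
proof (rule blinfun_eqI)
  fix x
  let ?P = "oproj V"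
  have "T x = T (?P x) + T (x - ?P x)" by (simp add: blinfun.diff_right)
  moreover have "?P (T (?P x)) = T (?P x)" using TV oproj_prop(1)[OF sV cV] oproj_id[OF sV cV] by simp
  moreover have "?P (T (x - ?P x)) = 0"
  proof (rule oproj_zero[OF sV cV])
    fix w assume "w \<in> V"
    then show "inner (T (x - ?P x)) w = 0" using adj_inner aTV oproj_prop(2)[OF sV cV] by metis
  qed
  ultimately have "?P (T x) = ?P (T (?P x)) + ?P (T (x - ?P x))" using oproj_add[OF sV cV] by simp
  then have "?P (T x) = T (?P x)" using \<open>?P (T (?P x)) = T (?P x)\<close> \<open>?P (T (x - ?P x)) = 0\<close> by simp
  then show "(projop V o\<^sub>L T) x = (T o\<^sub>L projop V) x" by (simp add: projop_apply[OF sV cV])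
qed

definition kerp :: "('a::{real_inner,complete_space} \<Rightarrow>\<^sub>L 'a) \<Rightarrow> 'a \<Rightarrow>\<^sub>L 'a" where
  "kerp X = projop {x. X x = 0}"

lemma ker_subspace: "subspace {x. blinfun_apply X x = 0}"
  unfolding subspace_def by (auto simp: blinfun.add_right blinfun.scaleR_right)

lemma ker_closed: "closed {x. blinfun_apply X x = 0}"
  by (intro closed_Collect_eq continuous_intros)

context fixes X :: "'a::{real_inner,complete_space} \<Rightarrow>\<^sub>L 'a" begin
lemma kerp_apply: "blinfun_apply (kerp X) = oproj {x. X x = 0}"
  unfolding kerp_def by (rule projop_apply[OF ker_subspace ker_closed])

lemma kerp_is_proj: "is_proj (kerp X)"
  unfolding kerp_def by (rule projop_is_proj[OF ker_subspace ker_closed])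

lemma kerp_ker: "X (kerp X x) = 0"
  using oproj_prop(1)[OF ker_subspace ker_closed] by (simp add: kerp_apply)

lemma kerp_fix: "X x = 0 \<Longrightarrow> kerp X x = x"
  using oproj_id[OF ker_subspace ker_closed] by (simp add: kerp_apply)

lemma kerp_orth: "X y = 0 \<Longrightarrow> inner (x - kerp X x) y = 0"
  using oproj_prop(2)[OF ker_subspace ker_closed] by (simp add: kerp_apply)

lemma kerp_commute:
  assumes "X o\<^sub>L T = T o\<^sub>L X" "X o\<^sub>L adj T = adj T o\<^sub>L X"
  shows "kerp X o\<^sub>L T = T o\<^sub>L kerp X"
  unfolding kerp_def
proof (rule projop_commute[OF ker_subspace ker_closed])
  fix v assume "v \<in> {x. X x = 0}"
  then have "X v = 0" by simp
  have "X (T v) = T (X v)" using assms(1) by (metis blinfun_apply_blinfun_compose)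
  then show "T v \<in> {x. X x = 0}" using \<open>X v = 0\<close> by simp
  have "X (adj T v) = adj T (X v)" using assms(2) by (metis blinfun_apply_blinfun_compose)
  then show "adj T v \<in> {x. X x = 0}" using \<open>X v = 0\<close> by simp
qed

end

lemma inverse_commute:
  assumes "R o\<^sub>L Y = id_blinfun" "Y o\<^sub>L R = id_blinfun" "Y o\<^sub>L S = S o\<^sub>L Y"
  shows "R o\<^sub>L S = S o\<^sub>L R"
proof -
  have "R o\<^sub>L S = R o\<^sub>L S o\<^sub>L (Y o\<^sub>L R)" using assms(2) by simp
  also have "\<dots> = R o\<^sub>L (Y o\<^sub>L S) o\<^sub>L R" using assms(3) by (simp add: comp_assoc_L)
  also have "\<dots> = (R o\<^sub>L Y) o\<^sub>L S o\<^sub>L R" by (simp add: comp_assoc_L)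
  also have "\<dots> = S o\<^sub>L R" using assms(1) by simp
  finally show ?thesis .
qed

lemma bounded_below_inverse:
  fixes Y :: "'a::{real_inner,complete_space} \<Rightarrow>\<^sub>L 'a"
  assumes e: "e > 0" and Yb: "\<And>z. e * (norm z)^2 \<le> inner (Y z) z"
  shows "\<exists>R. R o\<^sub>L Y = id_blinfun \<and> Y o\<^sub>L R = id_blinfun"
proof -
  have nb: "e * norm z \<le> norm (Y z)" for z
  proof (cases "z = 0")
    case True then show ?thesis by simp
  next
    case False
    have "e * (norm z)^2 \<le> norm (Y z) * norm z"
      using Yb[of z] Cauchy_Schwarz_ineq2[of "Y z" z] by (smt (verit) norm_cauchy_schwarz)
    then show ?thesis using False by (simp add: power2_eq_square)
  qed
  have inj: "inj (blinfun_apply Y)"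
  proof (rule injI)
    fix a b assume "Y a = Y b"
    then have "Y (a - b) = 0" by (simp add: blinfun.diff_right)
    then have "e * norm (a - b) \<le> 0" using nb[of "a - b"] by simp
    then show "a = b" using e by (simp add: mult_le_0_iff)
  qed
  let ?W = "range (blinfun_apply Y)"
  have sW: "subspace ?W"
    unfolding subspace_def
  proof (intro conjI ballI allI)
    show "0 \<in> ?W" by (metis blinfun.zero_right rangeI)
    fix a b assume "a \<in> ?W" "b \<in> ?W"
    then obtain a' b' where "a = Y a'" "b = Y b'" by blast
    then show "a + b \<in> ?W" by (metis blinfun.add_right rangeI)
  next
    fix c a assume "a \<in> ?W"
    then obtain a' where "a = Y a'" by blast
    then show "c *\<^sub>R a \<in> ?W" by (metis blinfun.scaleR_right rangeI)
  qed
  have cW: "closed ?W"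
  proof (rule closed_sequential_limits[THEN iffD2], intro allI impI, elim conjE)
    fix ys y assume ys: "\<forall>n. ys n \<in> ?W" and lim: "ys \<longlonglongrightarrow> y"
    have "\<forall>n. \<exists>x. ys n = Y x" using ys by blast
    from choice[OF this] obtain xs where xs0: "\<forall>n. ys n = Y (xs n)" by blast
    then have xs: "\<And>n. ys n = Y (xs n)" by blast
    have "Cauchy ys" using lim by (rule LIMSEQ_imp_Cauchy)
    have "Cauchy xs"
    proof (rule metric_CauchyI)
      fix r :: real assume r: "r > 0"
      then obtain N where N: "\<forall>m\<ge>N. \<forall>n\<ge>N. dist (ys m) (ys n) < e * r"
        using metric_CauchyD[OF \<open>Cauchy ys\<close>, of "e * r"] e by auto
      show "\<exists>N. \<forall>m\<ge>N. \<forall>n\<ge>N. dist (xs m) (xs n) < r"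
      proof (intro exI allI impI)
        fix m n assume "m \<ge> N" "n \<ge> N"
        then have "norm (Y (xs m - xs n)) < e * r" using N xs by (simp add: dist_norm blinfun.diff_right)
        then have "e * norm (xs m - xs n) < e * r" using nb[of "xs m - xs n"] by linarith
        then show "dist (xs m) (xs n) < r" using e by (simp add: dist_norm)
      qed
    qed
    then obtain x where x: "xs \<longlonglongrightarrow> x" using convergent_eq_Cauchy by blast
    have "(\<lambda>n. Y (xs n)) \<longlonglongrightarrow> Y x" using x by (intro tendsto_intros)
    moreover have "ys = (\<lambda>n. Y (xs n))" using xs by (simp add: fun_eq_iff)
    ultimately have "ys \<longlonglongrightarrow> Y x" by simp
    then have "y = Y x" using lim LIMSEQ_unique by blast
    then show "y \<in> ?W" by simp
  qed
  have surj: "surj (blinfun_apply Y)"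
  proof -
    have "z \<in> ?W" for z
    proof -
      define r where "r = z - oproj ?W z"
      have "Y r \<in> ?W" by simp
      then have "inner r (Y r) = 0" unfolding r_def by (rule oproj_prop(2)[OF sW cW])
      then have "e * (norm r)^2 \<le> 0" using Yb[of r] by (simp add: inner_commute)
      then have "r = 0" using e by (simp add: mult_le_0_iff)
      then show ?thesis using oproj_prop(1)[OF sW cW, of z] unfolding r_def by simp
    qed
    then show ?thesis by auto
  qed
  define g where "g = inv (blinfun_apply Y)"
  have gY: "g (Y x) = x" for x unfolding g_def using inj by simp
  have Yg: "Y (g y) = y" for y unfolding g_def using surj by (simp add: surj_f_inv_f)
  have bl: "bounded_linear g"
  proof (rule bounded_linear_intro[of _ "1 / e"])
    fix a b
    have "Y (g a + g b) = a + b" by (simp add: blinfun.add_right Yg)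
    then show "g (a + b) = g a + g b" by (metis gY)
  next
    fix c a
    have "Y (c *\<^sub>R g a) = c *\<^sub>R a" by (simp add: blinfun.scaleR_right Yg)
    then show "g (c *\<^sub>R a) = c *\<^sub>R g a" by (metis gY)
  next
    fix a
    have "e * norm (g a) \<le> norm a" using nb[of "g a"] by (simp add: Yg)
    then show "norm (g a) \<le> norm a * (1 / e)" using e by (simp add: field_simps)
  qed
  define R where "R = Blinfun g"
  have Rg: "blinfun_apply R = g" unfolding R_def using bl by (rule bounded_linear_Blinfun_apply)
  show ?thesis
    by (intro exI[of _ R] conjI; rule blinfun_eqI) (simp_all add: Rg gY Yg)
qed

lemma subspace_closure':
  fixes S :: "'a::real_normed_vector set"
  assumes "subspace S"
  shows "subspace (closure S)"
  unfolding subspace_def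
proof (intro conjI ballI allI)
  show "0 \<in> closure S" using subspace_0[OF assms] closure_subset by blast
next
  fix a b assume a: "a \<in> closure S" and b: "b \<in> closure S"
  show "a + b \<in> closure S"
  proof (subst closure_approachable, intro allI impI)
    fix e :: real assume e: "e > 0"
    obtain a' where a': "a' \<in> S" "dist a' a < e/2" using a e closure_approachable[of a S] by (meson half_gt_zero)
    obtain b' where b': "b' \<in> S" "dist b' b < e/2" using b e closure_approachable[of b S] by (meson half_gt_zero)
    have "a' + b' \<in> S" using a' b' assms by (simp add: subspace_add)
    moreover have "dist (a' + b') (a + b) < e"
    proof -
      have "dist (a' + b') (a + b) \<le> dist a' a + dist b' b"
        unfolding dist_norm by (rule order_trans[OF _ norm_triangle_ineq]) (simp add: algebra_simps)
      then show ?thesis using a' b' by linarith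
    qed
    ultimately show "\<exists>y\<in>S. dist y (a + b) < e" by blast
  qed
next
  fix c a assume a: "a \<in> closure S"
  show "c *\<^sub>R a \<in> closure S"
  proof (cases "c = 0")
    case True then show ?thesis using subspace_0[OF assms] closure_subset by auto
  next
    case False
    show ?thesis
    proof (subst closure_approachable, intro allI impI)
      fix e :: real assume e: "e > 0"
      then have "e / \<bar>c\<bar> > 0" using False by simp
      then obtain a' where a': "a' \<in> S" "dist a' a < e / \<bar>c\<bar>" using a closure_approachable[of a S] by blast
      have "c *\<^sub>R a' \<in> S" using a' assms by (simp add: subspace_scale)
      moreover have "dist (c *\<^sub>R a') (c *\<^sub>R a) = \<bar>c\<bar> * dist a' a"
        unfolding dist_norm by (metis norm_scaleR scaleR_right_diff_distrib)
      then have "dist (c *\<^sub>R a') (c *\<^sub>R a) < e" using a' False by (simp add: field_simps)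
      ultimately show "\<exists>y\<in>S. dist y (c *\<^sub>R a) < e" by blast
    qed
  qed
qed

lemma proj_inner: "is_proj P \<Longrightarrow> inner (P x) x = (norm (P x))^2"
  unfolding is_proj_def
  by (metis adj_inner blinfun_apply_blinfun_compose power2_norm_eq_inner)

lemma proj_idem: "is_proj P \<Longrightarrow> P (P x) = P x"
  unfolding is_proj_def by (metis blinfun_apply_blinfun_compose)

lemma proj_sym: "is_proj P \<Longrightarrow> inner (P x) y = inner x (P y)"
  unfolding is_proj_def by (metis adj_inner)

lemma proj_compl: "is_proj P \<Longrightarrow> is_proj (id_blinfun - P)"
  unfolding is_proj_def
  by (auto intro!: blinfun_eqI simp: adj_diff blinfun.diff_left blinfun.diff_right)
     (metis blinfun_apply_blinfun_compose)

lemma pos_op_inner: "pos_op A \<Longrightarrow> 0 \<le> inner (A x) x"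
  unfolding pos_op_def by auto

lemma proj_pos: "is_proj P \<Longrightarrow> pos_op P"
  unfolding pos_op_def using proj_inner is_proj_def by fastforce

locale vnt =
  fixes J :: "'h::{real_inner,complete_space} \<Rightarrow>\<^sub>L 'h"
    and M :: "('h \<Rightarrow>\<^sub>L 'h) set"
    and \<tau> :: "('h \<Rightarrow>\<^sub>L 'h) \<Rightarrow> complex"
  assumes cs: "complex_structure J"
    and vn: "von_neumann_algebra J M"
    and tr: "faithful_normal_tracial_state J M \<tau>"
begin

lemma M_sub: "A \<in> M \<Longrightarrow> A \<in> cplx_ops J"
  using vn unfolding von_neumann_algebra_def by blast
lemma M_id: "id_blinfun \<in> M"
  using vn unfolding von_neumann_algebra_def by blast
lemma M_add: "A \<in> M \<Longrightarrow> B \<in> M \<Longrightarrow> A + B \<in> M"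
  using vn unfolding von_neumann_algebra_def by blast
lemma M_comp: "A \<in> M \<Longrightarrow> B \<in> M \<Longrightarrow> A o\<^sub>L B \<in> M"
  using vn unfolding von_neumann_algebra_def by blast
lemma M_cscale: "A \<in> M \<Longrightarrow> cscale J c A \<in> M"
  using vn unfolding von_neumann_algebra_def by blast
lemma M_adj: "A \<in> M \<Longrightarrow> adj A \<in> M"
  using vn unfolding von_neumann_algebra_def by blast
lemma M_dc: "commutant J (commutant J M) = M"
  using vn unfolding von_neumann_algebra_def by blast

lemma cscale_real: "cscale J (complex_of_real r) A = r *\<^sub>R A"
  unfolding cscale_def by simp

lemma M_scaleR: "A \<in> M \<Longrightarrow> r *\<^sub>R A \<in> M"
  using M_cscale[of A "complex_of_real r"] by (simp add: cscale_real)

lemma M_zero: "0 \<in> M"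
  using M_scaleR[OF M_id, of 0] by simp

lemma M_diff: "A \<in> M \<Longrightarrow> B \<in> M \<Longrightarrow> A - B \<in> M"
  using M_add[OF _ M_scaleR[of B "-1"], of A] by simp

lemmas trd = tr[unfolded faithful_normal_tracial_state_def]
lemmas tr1 = conjunct1[OF trd]
lemmas tr2 = conjunct1[OF conjunct2[OF trd]]
lemmas tr3 = conjunct1[OF conjunct2[OF conjunct2[OF trd]]]
lemmas tr5 = conjunct1[OF conjunct2[OF conjunct2[OF conjunct2[OF conjunct2[OF trd]]]]]
lemmas tr7 = conjunct2[OF conjunct2[OF conjunct2[OF conjunct2[OF conjunct2[OF conjunct2[OF trd]]]]]]

lemma tau_add: "A \<in> M \<Longrightarrow> B \<in> M \<Longrightarrow> \<tau> (A + B) = \<tau> A + \<tau> B"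
  using tr1 by blast

lemma tau_cscale: "A \<in> M \<Longrightarrow> \<tau> (cscale J c A) = c * \<tau> A"
  using tr2 by blast

lemma tau_scaleR: "A \<in> M \<Longrightarrow> \<tau> (r *\<^sub>R A) = complex_of_real r * \<tau> A"
  using tau_cscale[of A "complex_of_real r"] by (simp add: cscale_real)

lemma tau_diff: "A \<in> M \<Longrightarrow> B \<in> M \<Longrightarrow> \<tau> (A - B) = \<tau> A - \<tau> B"
  using tau_add[OF _ M_scaleR[of B "-1"], of A] tau_scaleR[of B "-1"] by simp

lemma tau_pos: "A \<in> M \<Longrightarrow> pos_op A \<Longrightarrow> 0 \<le> Re (\<tau> A)"
  using tr3 by blast

lemma tau_comm: "A \<in> M \<Longrightarrow> B \<in> M \<Longrightarrow> \<tau> (A o\<^sub>L B) = \<tau> (B o\<^sub>L A)"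
  using tr5 by blast

lemma tau_normal:
  assumes "S \<noteq> {}" "S \<subseteq> M" "\<forall>B\<in>S. pos_op B"
    "\<forall>B\<in>S. \<forall>C\<in>S. \<exists>D\<in>S. op_le B D \<and> op_le C D"
    "A \<in> M" "adj A = A" "\<forall>B\<in>S. op_le B A"
    "\<forall>A'\<in>M. adj A' = A' \<and> (\<forall>B\<in>S. op_le B A') \<longrightarrow> op_le A A'"
  shows "Re (\<tau> A) = (SUP B\<in>S. Re (\<tau> B))"
proof -
  note t = tr7[rule_format, of S A]
  show ?thesis by (rule t) (use assms in blast)
qed

lemma tau_mono: "A \<in> M \<Longrightarrow> B \<in> M \<Longrightarrow> op_le A B \<Longrightarrow> Re (\<tau> A) \<le> Re (\<tau> B)"
  using tau_pos[OF M_diff[of B A]] tau_diff[of B A] unfolding op_le_def by simp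

lemma adj_J: "adj J = - J"
proof (rule adj_eqI)
  fix x y
  have JJ: "J (J y) = - y" using cs unfolding complex_structure_def
    by (metis blinfun_apply_blinfun_compose blinfun_apply_id_blinfun blinfun.minus_left)
  have "inner (J x) y = - inner (J x) (J (J y))" using JJ by simp
  also have "\<dots> = - inner x (J y)" using cs unfolding complex_structure_def by simp
  finally show "inner (J x) y = inner x ((- J) y)" by (simp add: blinfun.minus_left)
qed

lemma comm_adj:
  assumes T: "T \<in> commutant J M"
  shows "adj T \<in> commutant J M"
proof -
  have TJ: "T o\<^sub>L J = J o\<^sub>L T" and TA: "\<And>A. A \<in> M \<Longrightarrow> T o\<^sub>L A = A o\<^sub>L T"
    using T unfolding commutant_def cplx_ops_def by auto
  have "adj T o\<^sub>L J = J o\<^sub>L adj T"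
  proof -
    have "adj (J o\<^sub>L T) = adj (T o\<^sub>L J)" using TJ by simp
    then have "adj T o\<^sub>L (- J) = (- J) o\<^sub>L adj T" by (simp add: adj_comp adj_J)
    note eq = this
    show ?thesis
    proof (rule blinfun_eqI)
      fix x
      have "(adj T o\<^sub>L (- J)) x = ((- J) o\<^sub>L adj T) x" using eq by simp
      then show "(adj T o\<^sub>L J) x = (J o\<^sub>L adj T) x" by (simp add: blinfun.minus_left blinfun.minus_right)
    qed
  qed
  moreover have "adj T o\<^sub>L A = A o\<^sub>L adj T" if A: "A \<in> M" for A
  proof -
    have "T o\<^sub>L adj A = adj A o\<^sub>L T" using TA[OF M_adj[OF A]] .
    then have "adj (T o\<^sub>L adj A) = adj (adj A o\<^sub>L T)" by simp
    then show ?thesis by (simp add: adj_comp)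
  qed
  ultimately show ?thesis unfolding commutant_def cplx_ops_def by auto
qed

lemma in_M_by_comm:
  assumes "X o\<^sub>L J = J o\<^sub>L X" "\<And>T. T \<in> commutant J M \<Longrightarrow> X o\<^sub>L T = T o\<^sub>L X"
  shows "X \<in> M"
proof -
  have "X \<in> commutant J (commutant J M)" unfolding commutant_def[of J "commutant J M"] cplx_ops_def
    using assms by auto
  then show ?thesis using M_dc by simp
qed

lemma M_J: "A \<in> M \<Longrightarrow> A o\<^sub>L J = J o\<^sub>L A"
  using M_sub unfolding cplx_ops_def by auto

lemma comm_M: "T \<in> commutant J M \<Longrightarrow> A \<in> M \<Longrightarrow> A o\<^sub>L T = T o\<^sub>L A"
  unfolding commutant_def by auto

lemma kerp_M:
  assumes X: "X \<in> M"
  shows "kerp X \<in> M"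
proof (rule in_M_by_comm)
  show "kerp X o\<^sub>L J = J o\<^sub>L kerp X"
  proof (rule kerp_commute)
    show "X o\<^sub>L J = J o\<^sub>L X" using M_J[OF X] .
    show "X o\<^sub>L adj J = adj J o\<^sub>L X" using M_J[OF X] unfolding adj_J
    proof (intro blinfun_eqI)
      fix x
      have "(X o\<^sub>L J) x = (J o\<^sub>L X) x" using M_J[OF X] by simp
      then show "(X o\<^sub>L - J) x = (- J o\<^sub>L X) x" by (simp add: blinfun.minus_left blinfun.minus_right)
    qed
  qed
  fix T assume T: "T \<in> commutant J M"
  show "kerp X o\<^sub>L T = T o\<^sub>L kerp X"
    by (rule kerp_commute) (use comm_M[OF T X] comm_M[OF comm_adj[OF T] X] in auto)
qed

end

lemma range_subspace: "subspace (range (blinfun_apply Y))"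
  unfolding subspace_def
proof (intro conjI ballI allI)
  show "0 \<in> range (blinfun_apply Y)" by (metis blinfun.zero_right rangeI)
  fix a b assume "a \<in> range (blinfun_apply Y)" "b \<in> range (blinfun_apply Y)"
  then obtain a' b' where "a = Y a'" "b = Y b'" by blast
  then show "a + b \<in> range (blinfun_apply Y)" by (metis blinfun.add_right rangeI)
next
  fix c a assume "a \<in> range (blinfun_apply Y)"
  then obtain a' where "a = Y a'" by blast
  then show "c *\<^sub>R a \<in> range (blinfun_apply Y)" by (metis blinfun.scaleR_right rangeI)
qed

lemma pos_sym: "pos_op X \<Longrightarrow> inner (X a) b = inner a (X b)"
  unfolding pos_op_def by (metis adj_inner)

lemma in_closure_range:
  fixes X :: "'a::{real_inner,complete_space} \<Rightarrow>\<^sub>L 'a"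
  assumes X: "pos_op X" and u: "\<And>y. X y = 0 \<Longrightarrow> inner u y = 0"
  shows "u \<in> closure (range (blinfun_apply X))"
proof -
  let ?W = "closure (range (blinfun_apply X))"
  have sW: "subspace ?W" by (rule subspace_closure'[OF range_subspace])
  have cW: "closed ?W" by simp
  define p where "p = oproj ?W u"
  define r where "r = u - p"
  have pW: "p \<in> ?W" unfolding p_def by (rule oproj_prop(1)[OF sW cW])
  have rW: "inner r w = 0" if "w \<in> ?W" for w
    unfolding r_def p_def using oproj_prop(2)[OF sW cW that] .
  have "inner (X r) z = 0" for z
  proof -
    have "X z \<in> ?W" by (rule subsetD[OF closure_subset]) simp
    then have "inner r (X z) = 0" by (rule rW)
    then show ?thesis using pos_sym[OF X, of r z] by simp
  qed
  then have "inner (X r) (X r) = 0" by blast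
  then have "X r = 0" by simp
  then have "inner u r = 0" using u by simp
  moreover have "inner p r = 0" using rW[OF pW] by (simp add: inner_commute)
  ultimately have "inner r r = 0" unfolding r_def by (simp add: inner_diff_left)
  then have "r = 0" by simp
  then show ?thesis using pW unfolding r_def by simp
qed

context vnt
begin

definition res :: "('h \<Rightarrow>\<^sub>L 'h) \<Rightarrow> real \<Rightarrow> 'h \<Rightarrow>\<^sub>L 'h" where
  "res X e = (SOME R. R \<in> M \<and> R o\<^sub>L (X + e *\<^sub>R id_blinfun) = id_blinfun \<and> (X + e *\<^sub>R id_blinfun) o\<^sub>L R = id_blinfun)"

lemma res_ex:
  assumes X: "X \<in> M" "pos_op X" and e: "e > 0"
  shows "\<exists>R. R \<in> M \<and> R o\<^sub>L (X + e *\<^sub>R id_blinfun) = id_blinfun \<and> (X + e *\<^sub>R id_blinfun) o\<^sub>L R = id_blinfun"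
proof -
  let ?Y = "X + e *\<^sub>R id_blinfun"
  have "e * (norm z)^2 \<le> inner (?Y z) z" for z
    using pos_op_inner[OF X(2), of z] by (simp add: blinfun.add_left blinfun.scaleR_left inner_add_left power2_norm_eq_inner)
  then obtain R where R: "R o\<^sub>L ?Y = id_blinfun" "?Y o\<^sub>L R = id_blinfun"
    using bounded_below_inverse[OF e] by blast
  have YM: "?Y \<in> M" using X by (simp add: M_add M_scaleR M_id)
  have "R \<in> M"
  proof (rule in_M_by_comm)
    show "R o\<^sub>L J = J o\<^sub>L R" by (rule inverse_commute[OF R]) (rule M_J[OF YM])
    fix T assume "T \<in> commutant J M"
    then show "R o\<^sub>L T = T o\<^sub>L R" by (intro inverse_commute[OF R]) (rule comm_M[OF _ YM])
  qed
  then show ?thesis using R by blast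
qed

context
  fixes X :: "'h \<Rightarrow>\<^sub>L 'h" and e :: real
  assumes XM: "X \<in> M" and Xp: "pos_op X" and e: "e > 0"
begin

lemma res_basic: "res X e \<in> M" "res X e o\<^sub>L (X + e *\<^sub>R id_blinfun) = id_blinfun"
  "(X + e *\<^sub>R id_blinfun) o\<^sub>L res X e = id_blinfun"
proof -
  have "res X e \<in> M \<and> res X e o\<^sub>L (X + e *\<^sub>R id_blinfun) = id_blinfun \<and> (X + e *\<^sub>R id_blinfun) o\<^sub>L res X e = id_blinfun"
    unfolding res_def by (rule someI_ex[OF res_ex[OF XM Xp e]])
  then show "res X e \<in> M" "res X e o\<^sub>L (X + e *\<^sub>R id_blinfun) = id_blinfun"
    "(X + e *\<^sub>R id_blinfun) o\<^sub>L res X e = id_blinfun" by auto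
qed

lemma res_M: "res X e \<in> M" by (rule res_basic(1))

lemma res_l: "res X e (X y + e *\<^sub>R y) = y"
proof -
  have "(res X e o\<^sub>L (X + e *\<^sub>R id_blinfun)) y = y" using res_basic(2) by simp
  then show ?thesis by (simp add: blinfun.add_left blinfun.scaleR_left)
qed

lemma res_r: "X (res X e y) + e *\<^sub>R res X e y = y"
proof -
  have "((X + e *\<^sub>R id_blinfun) o\<^sub>L res X e) y = y" using res_basic(3) by simp
  then show ?thesis by (simp add: blinfun.add_left blinfun.scaleR_left)
qed

lemma res_XR: "X (res X e y) = y - e *\<^sub>R res X e y"
  using res_r[of y] by (simp add: algebra_simps)

lemma res_comm: "res X e (X y) = X (res X e y)"
proof -
  have "(X + e *\<^sub>R id_blinfun) o\<^sub>L X = X o\<^sub>L (X + e *\<^sub>R id_blinfun)"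
    by (rule blinfun_eqI) (simp add: blinfun.add_left blinfun.scaleR_left blinfun.scaleR_right blinfun.add_right)
  from inverse_commute[OF res_basic(2,3) this] have "res X e o\<^sub>L X = X o\<^sub>L res X e" .
  then show ?thesis by (metis blinfun_apply_blinfun_compose)
qed

lemma res_sym: "inner (res X e a) b = inner a (res X e b)"
proof -
  let ?R = "res X e"
  have "inner (?R a) b = inner (?R a) (X (?R b) + e *\<^sub>R ?R b)" using res_r[of b] by simp
  also have "\<dots> = inner (X (?R a)) (?R b) + e * inner (?R a) (?R b)"
    using pos_sym[OF Xp, of "?R a" "?R b"] by (simp add: inner_add_right)
  also have "\<dots> = inner (X (?R a) + e *\<^sub>R ?R a) (?R b)" by (simp add: inner_add_left)
  also have "\<dots> = inner a (?R b)" using res_r[of a] by simp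
  finally show ?thesis .
qed

lemma res_adj: "adj (res X e) = res X e"
  by (rule adj_eqI) (rule res_sym)

lemma res_eq: "inner (res X e y) y = inner (X (res X e y)) (res X e y) + e * inner (res X e y) (res X e y)"
proof -
  have "inner (res X e y) y = inner (res X e y) (X (res X e y) + e *\<^sub>R res X e y)" using res_r[of y] by simp
  then show ?thesis by (simp add: inner_add_right inner_commute)
qed

lemma res_pos: "0 \<le> inner (res X e y) y"
  using res_eq[of y] pos_op_inner[OF Xp, of "res X e y"] e by simp

lemma res_var: "2 * inner y w - inner (X w) w - e * inner w w \<le> inner (res X e y) y"
proof -
  define z where "z = res X e y"
  have y: "y = X z + e *\<^sub>R z" unfolding z_def using res_r[of y] by simp
  have "0 \<le> inner (X (w - z)) (w - z) + e * inner (w - z) (w - z)"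
    using pos_op_inner[OF Xp, of "w - z"] e by simp
  also have "inner (X (w - z)) (w - z) = inner (X w) w - 2 * inner (X z) w + inner (X z) z"
    using pos_sym[OF Xp, of w z] by (simp add: blinfun.diff_right inner_diff_left inner_diff_right inner_commute)
  also have "inner (w - z) (w - z) = inner w w - 2 * inner z w + inner z z"
    by (simp add: inner_diff_left inner_diff_right inner_commute)
  finally have "0 \<le> inner (X w) w - 2 * inner (X z) w + inner (X z) z + e * (inner w w - 2 * inner z w + inner z z)" .
  moreover have "inner y w = inner (X z) w + e * inner z w" using y by (simp add: inner_add_left)
  moreover have "inner (res X e y) y = inner (X z) z + e * inner z z"
    unfolding z_def by (rule res_eq)
  ultimately show ?thesis by (simp add: algebra_simps)
qed

lemma res_norm: "e * norm (res X e y) \<le> norm y"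
proof -
  define z where "z = res X e y"
  have "e * (norm z)^2 \<le> inner (res X e y) y" using res_eq[of y] pos_op_inner[OF Xp, of z]
    unfolding z_def by (simp add: power2_norm_eq_inner)
  also have "\<dots> \<le> norm z * norm y" unfolding z_def by (rule norm_cauchy_schwarz)
  finally have "e * norm z * norm z \<le> norm y * norm z" by (simp add: power2_eq_square algebra_simps)
  then show ?thesis unfolding z_def
    by (cases "norm (res X e y) = 0") (use e in auto)
qed

lemma res_ker: "X k = 0 \<Longrightarrow> e *\<^sub>R res X e k = k"
  using res_l[of k] by (metis add_0 blinfun.scaleR_right)

end

end

lemma op_leI:
  assumes "adj A = A" "adj B = B" "\<And>x. inner (A x) x \<le> inner (B x) x"
  shows "op_le A B"
  unfolding op_le_def pos_op_def using assms
  by (auto simp: adj_diff blinfun.diff_left inner_diff_left)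

lemma op_leD: "op_le A B \<Longrightarrow> inner (A x) x \<le> inner (B x) x"
  unfolding op_le_def pos_op_def by (auto simp: blinfun.diff_left inner_diff_left)

lemma pos_adj: "pos_op A \<Longrightarrow> adj A = A"
  unfolding pos_op_def by simp

context vnt
begin

context
  fixes X :: "'h \<Rightarrow>\<^sub>L 'h"
  assumes XM: "X \<in> M" and Xp: "pos_op X"
begin

lemma decomp:
  assumes e: "e > 0"
  shows "e * inner (res X e x) x = (norm (kerp X x))^2 + e * inner (res X e (x - kerp X x)) (x - kerp X x)"
proof -
  define k where "k = kerp X x"
  define u where "u = x - k"
  let ?R = "res X e"
  have Xk: "X k = 0" unfolding k_def by (rule kerp_ker)
  have Rk: "e *\<^sub>R ?R k = k" by (rule res_ker[OF XM Xp e Xk])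
  have uk: "inner u k = 0" unfolding u_def k_def by (rule kerp_orth[OF Xk[unfolded k_def]])
  have x: "x = k + u" unfolding u_def by simp
  have ex: "e *\<^sub>R ?R x = e *\<^sub>R ?R k + e *\<^sub>R ?R u"
    using x by (metis blinfun.add_right scaleR_add_right)
  have "e * inner (?R x) x = inner (e *\<^sub>R ?R x) x" by simp
  also have "\<dots> = inner (e *\<^sub>R ?R k + e *\<^sub>R ?R u) (k + u)"
    using ex x by simp
  also have "\<dots> = inner k (k + u) + inner (e *\<^sub>R ?R u) k + e * inner (?R u) u"
    using Rk by (simp add: inner_add_left inner_add_right)
  also have "inner (e *\<^sub>R ?R u) k = inner u (e *\<^sub>R ?R k)"
    using res_sym[OF XM Xp e, of u k] by simp
  also have "\<dots> = 0" using Rk uk by simp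
  finally have "e * inner (?R x) x = inner k k + e * inner (?R u) u"
    using uk by (simp add: inner_add_right inner_commute)
  then show ?thesis unfolding k_def u_def by (simp add: power2_norm_eq_inner)
qed

lemma f_apply: "e > 0 \<Longrightarrow> (X o\<^sub>L res X e) y = y - e *\<^sub>R res X e y"
  using res_XR[OF XM Xp] by simp

lemma f_adj:
  assumes e: "e > 0"
  shows "adj (X o\<^sub>L res X e) = X o\<^sub>L res X e"
proof -
  have "adj (X o\<^sub>L res X e) = res X e o\<^sub>L X" using res_adj[OF XM Xp e] pos_adj[OF Xp] by (simp add: adj_comp)
  also have "\<dots> = X o\<^sub>L res X e" by (rule blinfun_eqI) (simp add: res_comm[OF XM Xp e])
  finally show ?thesis .
qed

lemma f_pos:
  assumes e: "e > 0"
  shows "pos_op (X o\<^sub>L res X e)"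
  unfolding pos_op_def
proof (intro conjI allI)
  show "adj (X o\<^sub>L res X e) = X o\<^sub>L res X e" by (rule f_adj[OF e])
  fix y
  define z where "z = res X e y"
  have y: "y = X z + e *\<^sub>R z" unfolding z_def using res_r[OF XM Xp e, of y] by simp
  have "inner ((X o\<^sub>L res X e) y) y = inner (X z) y" unfolding z_def by simp
  also have "\<dots> = inner (X z) (X z + e *\<^sub>R z)" by (subst y) (rule refl)
  also have "\<dots> = inner (X z) (X z) + e * inner (X z) z" by (simp add: inner_add_right)
  finally have "inner ((X o\<^sub>L res X e) y) y = inner (X z) (X z) + e * inner (X z) z" .
  then show "0 \<le> inner ((X o\<^sub>L res X e) y) y" using pos_op_inner[OF Xp, of z] e by simp
qed

lemma f_mono:
  assumes e: "e > 0" and ee: "e \<le> e1"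
  shows "op_le (X o\<^sub>L res X e1) (X o\<^sub>L res X e)"
proof (rule op_leI)
  have e1: "e1 > 0" using e ee by simp
  show "adj (X o\<^sub>L res X e1) = X o\<^sub>L res X e1" by (rule f_adj[OF e1])
  show "adj (X o\<^sub>L res X e) = X o\<^sub>L res X e" by (rule f_adj[OF e])
  fix y
  define z where "z = res X e y"
  define a where "a = inner (X z) z"
  define b where "b = inner z z"
  define t where "t = e / e1"
  have a0: "a \<ge> 0" unfolding a_def by (rule pos_op_inner[OF Xp])
  have et: "e = e1 * t" unfolding t_def using e1 by simp
  have t1: "t \<le> 1" "t \<ge> 0" unfolding t_def using e e1 ee by auto
  have Ry: "inner (res X e y) y = a + e * b" unfolding a_def b_def z_def by (rule res_eq[OF XM Xp e])
  have yz: "inner y z = a + e * b" using Ry unfolding z_def by (simp add: inner_commute)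
  have "2 * inner y (t *\<^sub>R z) - inner (X (t *\<^sub>R z)) (t *\<^sub>R z) - e1 * inner (t *\<^sub>R z) (t *\<^sub>R z) \<le> inner (res X e1 y) y"
    by (rule res_var[OF XM Xp e1])
  then have v: "2 * t * (a + e * b) - t * t * a - e1 * t * t * b \<le> inner (res X e1 y) y"
    using yz unfolding a_def b_def by (simp add: blinfun.scaleR_right algebra_simps)
  have "e1 * (2 * t * (a + e * b) - t * t * a - e1 * t * t * b) = e * (a + e * b) + e * a * (1 - t)"
    unfolding et by (simp add: algebra_simps)
  moreover have "e * a * (1 - t) \<ge> 0" using e a0 t1 by simp
  ultimately have "e * (a + e * b) \<le> e1 * inner (res X e1 y) y"
    using mult_left_mono[OF v, of e1] e1 by linarith
  then have "e * inner (res X e y) y \<le> e1 * inner (res X e1 y) y" using Ry by simp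
  then show "inner ((X o\<^sub>L res X e1) y) y \<le> inner ((X o\<^sub>L res X e) y) y"
    using f_apply[OF e, of y] f_apply[OF e1, of y] by (simp add: inner_diff_left)
qed

lemma res_small:
  assumes u: "\<And>y. X y = 0 \<Longrightarrow> inner u y = 0" and eta: "\<eta> > 0"
  shows "\<exists>e>0. e * inner (res X e u) u \<le> \<eta>"
proof -
  have uc: "u \<in> closure (range (blinfun_apply X))" by (rule in_closure_range[OF Xp u])
  define \<delta> where "\<delta> = \<eta> / (3 * (norm u + 1))"
  have d0: "\<delta> > 0" unfolding \<delta>_def using eta by (simp add: add_nonneg_pos)
  obtain v where v: "v \<in> range (blinfun_apply X)" "dist v u < \<delta>"
    using uc d0 closure_approachable by blast
  then obtain y where vy: "v = X y" by blast
  define e where "e = \<delta> / (norm y + 1)"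
  have e0: "e > 0" unfolding e_def using d0 by (simp add: add_nonneg_pos)
  let ?R = "res X e"
  have ey: "e * norm y \<le> \<delta>"
  proof -
    have p: "0 < norm y + 1" using norm_ge_zero[of y] by linarith
    have "norm y / (norm y + 1) \<le> 1" using p by (simp add: divide_le_eq)
    then have "\<delta> * (norm y / (norm y + 1)) \<le> \<delta> * 1" using d0 by (intro mult_left_mono) auto
    then show ?thesis unfolding e_def by simp
  qed
  have n1: "norm (e *\<^sub>R ?R (u - X y)) < \<delta>"
  proof -
    have "norm (e *\<^sub>R ?R (u - X y)) = e * norm (?R (u - X y))" using e0 by simp
    also have "\<dots> \<le> norm (u - X y)" by (rule res_norm[OF XM Xp e0])
    also have "\<dots> < \<delta>" using v vy by (simp add: dist_norm norm_minus_commute)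
    finally show ?thesis .
  qed
  have n2: "norm (e *\<^sub>R ?R (X y)) \<le> 2 * \<delta>"
  proof -
    have "e *\<^sub>R ?R (X y) = e *\<^sub>R y - e *\<^sub>R (e *\<^sub>R ?R y)"
      using res_comm[OF XM Xp e0, of y] res_XR[OF XM Xp e0, of y] by (simp add: scaleR_right_diff_distrib)
    then have t: "norm (e *\<^sub>R ?R (X y)) \<le> norm (e *\<^sub>R y) + norm (e *\<^sub>R (e *\<^sub>R ?R y))"
      by (metis norm_triangle_ineq4)
    have "norm (e *\<^sub>R (e *\<^sub>R ?R y)) = e * (e * norm (?R y))" using e0 by simp
    also have "\<dots> \<le> e * norm y" using res_norm[OF XM Xp e0, of y] e0 by (simp add: mult_left_mono)
    finally have "norm (e *\<^sub>R (e *\<^sub>R ?R y)) \<le> e * norm y" .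
    then have "norm (e *\<^sub>R ?R (X y)) \<le> norm (e *\<^sub>R y) + e * norm y" using t by linarith
    moreover have "norm (e *\<^sub>R y) = e * norm y" using e0 by simp
    ultimately show ?thesis using ey by linarith
  qed
  have "?R u = ?R (u - X y) + ?R (X y)" by (simp add: blinfun.diff_right)
  then have "e *\<^sub>R ?R u = e *\<^sub>R ?R (u - X y) + e *\<^sub>R ?R (X y)" by (simp add: scaleR_add_right)
  then have "norm (e *\<^sub>R ?R u) \<le> norm (e *\<^sub>R ?R (u - X y)) + norm (e *\<^sub>R ?R (X y))"
    by (metis norm_triangle_ineq)
  then have nR: "norm (e *\<^sub>R ?R u) \<le> 3 * \<delta>" using n1 n2 by linarith
  have "e * inner (?R u) u = inner (e *\<^sub>R ?R u) u" by simp
  also have "\<dots> \<le> norm (e *\<^sub>R ?R u) * norm u" by (rule norm_cauchy_schwarz)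
  also have "\<dots> \<le> 3 * \<delta> * norm u" using nR by (simp add: mult_right_mono)
  also have "\<dots> \<le> \<eta>"
  proof -
    have pu: "norm u + 1 \<noteq> 0" using norm_ge_zero[of u] by linarith
    have "3 * \<delta> * norm u = \<eta> * (norm u / (norm u + 1))" unfolding \<delta>_def using pu by (simp add: field_simps)
    also have "\<dots> \<le> \<eta> * 1"
    proof -
      have p: "0 < norm u + 1" using norm_ge_zero[of u] by linarith
      have "norm u / (norm u + 1) \<le> 1" using p by (simp add: divide_le_eq)
      then show ?thesis using eta by (intro mult_left_mono) auto
    qed
    finally show ?thesis by simp
  qed
  finally show ?thesis using e0 by blast
qed

lemma supp_le:
  assumes c: "\<And>e. e > 0 \<Longrightarrow> Re (\<tau> (X o\<^sub>L res X e)) \<le> c"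
  shows "Re (\<tau> (id_blinfun - kerp X)) \<le> c"
proof -
  let ?f = "\<lambda>e. X o\<^sub>L res X e"
  define S where "S = ?f ` {e. e > 0}"
  define A where "A = id_blinfun - kerp X"
  have Sne: "S \<noteq> {}" unfolding S_def using zero_less_one by blast
  have AM: "A \<in> M" unfolding A_def by (intro M_diff M_id kerp_M XM)
  have Aadj: "adj A = A" unfolding A_def using kerp_is_proj[of X] unfolding is_proj_def by (simp add: adj_diff)
  have Ain: "inner (A x) x = inner x x - (norm (kerp X x))^2" for x
    unfolding A_def using proj_inner[OF kerp_is_proj, of X x] by (simp add: blinfun.diff_left inner_diff_left)
  have key: "inner (?f e x) x = inner x x - (norm (kerp X x))^2 - e * inner (res X e (x - kerp X x)) (x - kerp X x)"
    if e: "e > 0" for e x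
    using f_apply[OF e, of x] decomp[OF e, of x] by (simp add: inner_diff_left)
  have "Re (\<tau> A) = (SUP B\<in>S. Re (\<tau> B))"
  proof (rule tau_normal)
    show "S \<noteq> {}" by (rule Sne)
    show "S \<subseteq> M" unfolding S_def using M_comp[OF XM res_M[OF XM Xp]] by auto
    show "\<forall>B\<in>S. pos_op B" unfolding S_def using f_pos by auto
    show "\<forall>B\<in>S. \<forall>C\<in>S. \<exists>D\<in>S. op_le B D \<and> op_le C D"
    proof (intro ballI)
      fix B C assume "B \<in> S" "C \<in> S"
      then obtain e1 e2 where B: "B = ?f e1" "e1 > 0" and C: "C = ?f e2" "e2 > 0" unfolding S_def by auto
      have "min e1 e2 > 0" using B C by simp
      moreover have "op_le B (?f (min e1 e2))" using B \<open>min e1 e2 > 0\<close> by (simp add: f_mono)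
      moreover have "op_le C (?f (min e1 e2))" using C \<open>min e1 e2 > 0\<close> by (simp add: f_mono)
      moreover have "?f (min e1 e2) \<in> S" unfolding S_def using \<open>min e1 e2 > 0\<close> by blast
      ultimately show "\<exists>D\<in>S. op_le B D \<and> op_le C D" by blast
    qed
    show "A \<in> M" by (rule AM)
    show "adj A = A" by (rule Aadj)
    show "\<forall>B\<in>S. op_le B A"
    proof
      fix B assume "B \<in> S"
      then obtain e where B: "B = ?f e" "e > 0" unfolding S_def by auto
      show "op_le B A"
      proof (rule op_leI)
        show "adj B = B" using B f_adj by simp
        show "adj A = A" by (rule Aadj)
        fix x
        have "0 \<le> e * inner (res X e (x - kerp X x)) (x - kerp X x)"
          using res_pos[OF XM Xp B(2)] B(2) by simp
        then show "inner (B x) x \<le> inner (A x) x" using key[OF B(2), of x] Ain[of x] B by simp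
      qed
    qed
    show "\<forall>A'\<in>M. adj A' = A' \<and> (\<forall>B\<in>S. op_le B A') \<longrightarrow> op_le A A'"
    proof (intro ballI impI, elim conjE)
      fix A' assume A'M: "A' \<in> M" and A'adj: "adj A' = A'" and le: "\<forall>B\<in>S. op_le B A'"
      show "op_le A A'"
      proof (rule op_leI)
        show "adj A = A" by (rule Aadj)
        show "adj A' = A'" by (rule A'adj)
        fix x
        define u where "u = x - kerp X x"
        have uo: "\<And>y. X y = 0 \<Longrightarrow> inner u y = 0" unfolding u_def by (rule kerp_orth)
        have "inner (A x) x - \<eta> \<le> inner (A' x) x" if eta: "\<eta> > 0" for \<eta>
        proof -
          obtain e where e: "e > 0" "e * inner (res X e u) u \<le> \<eta>" using res_small[OF uo eta] by blast
          have "?f e \<in> S" unfolding S_def using e by auto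
          then have "inner (?f e x) x \<le> inner (A' x) x" using le op_leD by blast
          then show ?thesis using key[OF e(1), of x] Ain[of x] e(2) unfolding u_def by simp
        qed
        then show "inner (A x) x \<le> inner (A' x) x"
          by (metis diff_le_eq field_le_epsilon add.commute)
      qed
    qed
  qed
  also have "\<dots> \<le> c"
  proof (rule cSUP_least[OF Sne])
    fix B assume "B \<in> S"
    then obtain e where "B = ?f e" "e > 0" unfolding S_def by auto
    then show "Re (\<tau> B) \<le> c" using c by simp
  qed
  finally show ?thesis unfolding A_def .
qed

end

lemma proj_res_bound:
  assumes PM: "P \<in> M" "is_proj P" and QM: "Q \<in> M" "is_proj Q" and e: "e > 0"
  shows "Re (\<tau> (P o\<^sub>L res (P + Q) e)) \<le> Re (\<tau> P)"
proof -
  let ?X = "P + Q"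
  have XM: "?X \<in> M" using PM QM by (simp add: M_add)
  have Xp: "pos_op ?X" unfolding pos_op_def
    using PM(2) QM(2) proj_inner[OF PM(2)] proj_inner[OF QM(2)] unfolding is_proj_def
    by (auto simp: adj_add blinfun.add_left inner_add_left)
  let ?R = "res ?X e"
  have RM: "?R \<in> M" by (rule res_M[OF XM Xp e])
  have PP: "P o\<^sub>L P = P" "adj P = P" using PM(2) unfolding is_proj_def by auto
  have "\<tau> (P o\<^sub>L ?R) = \<tau> (P o\<^sub>L (P o\<^sub>L ?R))" using PP by (simp add: comp_assoc_L[symmetric])
  also have "\<dots> = \<tau> ((P o\<^sub>L ?R) o\<^sub>L P)" by (rule tau_comm[OF PM(1) M_comp[OF PM(1) RM]])
  finally have eq: "\<tau> (P o\<^sub>L ?R) = \<tau> ((P o\<^sub>L ?R) o\<^sub>L P)" .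
  have "op_le ((P o\<^sub>L ?R) o\<^sub>L P) P"
  proof (rule op_leI)
    show "adj ((P o\<^sub>L ?R) o\<^sub>L P) = (P o\<^sub>L ?R) o\<^sub>L P"
      using PP res_adj[OF XM Xp e] by (simp add: adj_comp comp_assoc_L)
    show "adj P = P" by (rule PP(2))
    fix x
    define y where "y = P x"
    define w where "w = ?R y"
    have y: "y = ?X w + e *\<^sub>R w" unfolding w_def using res_r[OF XM Xp e, of y] by simp
    have "inner (((P o\<^sub>L ?R) o\<^sub>L P) x) x = inner (?R y) y"
      unfolding y_def using proj_sym[OF PM(2)] by simp
    also have "\<dots> = inner w y" unfolding w_def by (simp add: inner_commute)
    also have "\<dots> = 2 * inner y w - inner (?X w) w - e * inner w w"
      using y by (simp add: inner_add_right inner_commute)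
    also have "\<dots> \<le> 2 * inner y w - inner (P w) w"
    proof -
      have "inner (?X w) w = inner (P w) w + inner (Q w) w" by (simp add: blinfun.add_left inner_add_left)
      moreover have "0 \<le> inner (Q w) w" using proj_inner[OF QM(2)] by simp
      moreover have "0 \<le> e * inner w w" using e by simp
      ultimately show ?thesis by linarith
    qed
    also have "inner y w = inner (P x) (P w)" unfolding y_def using proj_sym[OF PM(2), of "P x" w] proj_idem[OF PM(2)] by simp
    also have "inner (P w) w = inner (P w) (P w)" using proj_inner[OF PM(2), of w] by (simp add: power2_norm_eq_inner)
    also have "2 * inner (P x) (P w) - inner (P w) (P w) \<le> inner (P x) (P x)"
    proof -
      have "0 \<le> inner (P x - P w) (P x - P w)" by simp
      then show ?thesis by (simp add: inner_diff_left inner_diff_right inner_commute)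
    qed
    also have "inner (P x) (P x) = inner (P x) x" using proj_inner[OF PM(2), of x] by (simp add: power2_norm_eq_inner)
    finally show "inner (((P o\<^sub>L ?R) o\<^sub>L P) x) x \<le> inner (P x) x" .
  qed
  then have "Re (\<tau> ((P o\<^sub>L ?R) o\<^sub>L P)) \<le> Re (\<tau> P)"
    by (intro tau_mono M_comp PM(1) RM)
  then show ?thesis using eq by simp
qed

lemma meet:
  assumes EM: "E \<in> M" "is_proj E" and FM: "F \<in> M" "is_proj F"
  shows "\<exists>G\<in>M. is_proj G \<and> (\<forall>x. E (G x) = G x) \<and> (\<forall>x. F (G x) = G x) \<and>
           Re (\<tau> (id_blinfun - G)) \<le> Re (\<tau> (id_blinfun - E)) + Re (\<tau> (id_blinfun - F))"
proof -
  define P where "P = id_blinfun - E"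
  define Q where "Q = id_blinfun - F"
  have PM: "P \<in> M" "is_proj P" unfolding P_def using EM by (auto intro: M_diff M_id proj_compl)
  have QM: "Q \<in> M" "is_proj Q" unfolding Q_def using FM by (auto intro: M_diff M_id proj_compl)
  let ?X = "P + Q"
  have XM: "?X \<in> M" using PM QM by (simp add: M_add)
  have Xp: "pos_op ?X" unfolding pos_op_def
    using PM(2) QM(2) proj_inner[OF PM(2)] proj_inner[OF QM(2)] unfolding is_proj_def
    by (auto simp: adj_add blinfun.add_left inner_add_left)
  define G where "G = kerp ?X"
  have GM: "G \<in> M" unfolding G_def by (rule kerp_M[OF XM])
  have Gp: "is_proj G" unfolding G_def by (rule kerp_is_proj)
  have gfix: "P (G x) = 0 \<and> Q (G x) = 0" for x
  proof -
    have "?X (G x) = 0" unfolding G_def by (rule kerp_ker)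
    then have "inner (?X (G x)) (G x) = 0" by simp
    then have "(norm (P (G x)))^2 + (norm (Q (G x)))^2 = 0"
      using proj_inner[OF PM(2), of "G x"] proj_inner[OF QM(2), of "G x"]
      by (simp add: blinfun.add_left inner_add_left)
    then show ?thesis by (simp add: add_nonneg_eq_0_iff)
  qed
  have "Re (\<tau> (id_blinfun - G)) \<le> Re (\<tau> P) + Re (\<tau> Q)"
    unfolding G_def
  proof (rule supp_le[OF XM Xp])
    fix e :: real assume e: "e > 0"
    have RM: "res ?X e \<in> M" by (rule res_M[OF XM Xp e])
    have "?X o\<^sub>L res ?X e = (P o\<^sub>L res ?X e) + (Q o\<^sub>L res ?X e)"
      by (rule blinfun_eqI) (simp add: blinfun.add_left)
    then have "\<tau> (?X o\<^sub>L res ?X e) = \<tau> (P o\<^sub>L res ?X e) + \<tau> (Q o\<^sub>L res ?X e)"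
      using tau_add[OF M_comp[OF PM(1) RM] M_comp[OF QM(1) RM]] by simp
    moreover have "Re (\<tau> (P o\<^sub>L res ?X e)) \<le> Re (\<tau> P)" by (rule proj_res_bound[OF PM QM e])
    moreover have "Re (\<tau> (Q o\<^sub>L res ?X e)) \<le> Re (\<tau> Q)"
      using proj_res_bound[OF QM PM e] by (simp add: add.commute)
    ultimately show "Re (\<tau> (?X o\<^sub>L res ?X e)) \<le> Re (\<tau> P) + Re (\<tau> Q)" by simp
  qed
  moreover have "\<forall>x. E (G x) = G x" using gfix unfolding P_def by (simp add: blinfun.diff_left)
  moreover have "\<forall>x. F (G x) = G x" using gfix unfolding Q_def by (simp add: blinfun.diff_left)
  ultimately show ?thesis using GM Gp unfolding P_def Q_def by blast
qed

end

lemma nbhd_istop: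
  fixes N :: "real \<Rightarrow> real \<Rightarrow> 'b set" and add :: "'a \<Rightarrow> 'b \<Rightarrow> 'a"
  assumes mono: "\<And>e d e' d'. e \<le> e' \<Longrightarrow> d \<le> d' \<Longrightarrow> N e d \<subseteq> N e' d'"
  shows "istopology (\<lambda>U. U \<subseteq> S \<and> (\<forall>A\<in>U. \<exists>\<epsilon>>0. \<exists>\<delta>>0. add A ` N \<epsilon> \<delta> \<subseteq> U))"
  unfolding istopology_def
proof (rule conjI; intro allI impI)
  fix U V assume U: "U \<subseteq> S \<and> (\<forall>A\<in>U. \<exists>\<epsilon>>0. \<exists>\<delta>>0. add A ` N \<epsilon> \<delta> \<subseteq> U)"
    and V: "V \<subseteq> S \<and> (\<forall>A\<in>V. \<exists>\<epsilon>>0. \<exists>\<delta>>0. add A ` N \<epsilon> \<delta> \<subseteq> V)"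
  have s: "U \<inter> V \<subseteq> S" using U by blast
  have "\<forall>A\<in>U \<inter> V. \<exists>\<epsilon>>0. \<exists>\<delta>>0. add A ` N \<epsilon> \<delta> \<subseteq> U \<inter> V"
  proof
    fix A assume "A \<in> U \<inter> V"
    then obtain e1 d1 e2 d2 where "e1 > 0" "d1 > 0" "add A ` N e1 d1 \<subseteq> U" "e2 > 0" "d2 > 0" "add A ` N e2 d2 \<subseteq> V"
      using U V by (meson IntD1 IntD2)
    moreover have "N (min e1 e2) (min d1 d2) \<subseteq> N e1 d1" "N (min e1 e2) (min d1 d2) \<subseteq> N e2 d2"
      by (simp_all add: mono)
    ultimately have "min e1 e2 > 0 \<and> min d1 d2 > 0 \<and> add A ` N (min e1 e2) (min d1 d2) \<subseteq> U \<inter> V"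
      by (meson image_mono le_inf_iff min_less_iff_conj order_trans)
    then show "\<exists>\<epsilon>>0. \<exists>\<delta>>0. add A ` N \<epsilon> \<delta> \<subseteq> U \<inter> V" by blast
  qed
  then show "U \<inter> V \<subseteq> S \<and> (\<forall>A\<in>U \<inter> V. \<exists>\<epsilon>>0. \<exists>\<delta>>0. add A ` N \<epsilon> \<delta> \<subseteq> U \<inter> V)"
    using s by blast
next
  fix K assume K: "\<forall>U\<in>K. U \<subseteq> S \<and> (\<forall>A\<in>U. \<exists>\<epsilon>>0. \<exists>\<delta>>0. add A ` N \<epsilon> \<delta> \<subseteq> U)"
  show "\<Union>K \<subseteq> S \<and> (\<forall>A\<in>\<Union>K. \<exists>\<epsilon>>0. \<exists>\<delta>>0. add A ` N \<epsilon> \<delta> \<subseteq> \<Union>K)"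
  proof (intro conjI ballI)
    show "\<Union>K \<subseteq> S" using K by blast
    fix A assume "A \<in> \<Union>K"
    then obtain U where "U \<in> K" "A \<in> U" by blast
    then obtain e d where "e > 0" "d > 0" "add A ` N e d \<subseteq> U" using K by blast
    then show "\<exists>\<epsilon>>0. \<exists>\<delta>>0. add A ` N \<epsilon> \<delta> \<subseteq> \<Union>K" using \<open>U \<in> K\<close> by blast
  qed
qed

lemma meas_nbhd_mono: "e \<le> e' \<Longrightarrow> d \<le> d' \<Longrightarrow> meas_nbhd M \<tau> e d \<subseteq> meas_nbhd M \<tau> e' d'"
  unfolding meas_nbhd_def by fastforce

lemma openin_meas:
  "openin (meas_topology M \<tau>) U \<longleftrightarrow>
     U \<subseteq> M \<and> (\<forall>A\<in>U. \<exists>\<epsilon>>0. \<exists>\<delta>>0. (\<lambda>B. A + B) ` meas_nbhd M \<tau> \<epsilon> \<delta> \<subseteq> U)"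
proof -
  have "istopology (\<lambda>U. U \<subseteq> M \<and> (\<forall>A\<in>U. \<exists>\<epsilon>>0. \<exists>\<delta>>0. (\<lambda>B. A + B) ` meas_nbhd M \<tau> \<epsilon> \<delta> \<subseteq> U))"
    by (rule nbhd_istop[OF meas_nbhd_mono])
  then show ?thesis unfolding meas_topology_def by simp
qed

lemma proj_norm_le:
  assumes "is_proj G"
  shows "norm (G x) \<le> norm x"
proof -
  have "(norm (G x))^2 = inner (G x) x" using proj_inner[OF assms] by simp
  also have "\<dots> \<le> norm (G x) * norm x" by (rule norm_cauchy_schwarz)
  finally show ?thesis by (cases "norm (G x) = 0") (auto simp: power2_eq_square)
qed

lemma id_is_proj: "is_proj id_blinfun"
  unfolding is_proj_def by simp

context vnt
begin

lemma tau_zero: "\<tau> 0 = 0"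
  using tau_add[OF M_zero M_zero] by simp

lemma meet_fin:
  assumes "finite I"
  shows "(\<forall>i\<in>I. E i \<in> M \<and> is_proj (E i)) \<Longrightarrow>
    \<exists>G\<in>M. is_proj G \<and> (\<forall>i\<in>I. \<forall>x. E i (G x) = G x) \<and>
      Re (\<tau> (id_blinfun - G)) \<le> (\<Sum>i\<in>I. Re (\<tau> (id_blinfun - E i)))"
  using assms
proof (induction I rule: finite_induct)
  case empty
  show ?case using M_id id_is_proj tau_zero by (intro bexI[of _ id_blinfun]) auto
next
  case (insert a I)
  then obtain G where G: "G \<in> M" "is_proj G" "\<forall>i\<in>I. \<forall>x. E i (G x) = G x"
    "Re (\<tau> (id_blinfun - G)) \<le> (\<Sum>i\<in>I. Re (\<tau> (id_blinfun - E i)))" by auto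
  have Ea: "E a \<in> M" "is_proj (E a)" using insert.prems by auto
  obtain H where H: "H \<in> M" "is_proj H" "\<forall>x. E a (H x) = H x" "\<forall>x. G (H x) = H x"
    "Re (\<tau> (id_blinfun - H)) \<le> Re (\<tau> (id_blinfun - E a)) + Re (\<tau> (id_blinfun - G))"
    using meet[OF Ea G(1,2)] by blast
  have "\<forall>i\<in>insert a I. \<forall>x. E i (H x) = H x"
  proof (intro ballI allI)
    fix i x assume "i \<in> insert a I"
    then show "E i (H x) = H x"
    proof
      assume "i = a" then show ?thesis using H(3) by simp
    next
      assume "i \<in> I"
      then have "E i (G (H x)) = G (H x)" using G(3) by blast
      then show ?thesis using H(4) by simp
    qed
  qed
  moreover have "Re (\<tau> (id_blinfun - H)) \<le> (\<Sum>i\<in>insert a I. Re (\<tau> (id_blinfun - E i)))"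
    using H(5) G(4) insert.hyps by simp
  ultimately show ?case using H(1,2) by blast
qed

lemma nbhd_add:
  assumes B: "B \<in> meas_nbhd M \<tau> e1 d1" and C: "C \<in> meas_nbhd M \<tau> e2 d2"
  shows "B + C \<in> meas_nbhd M \<tau> (e1 + e2) (d1 + d2)"
proof -
  obtain E where E: "B \<in> M" "E \<in> M" "is_proj E" "norm (B o\<^sub>L E) \<le> e1" "Re (\<tau> (id_blinfun - E)) \<le> d1"
    using B unfolding meas_nbhd_def by blast
  obtain F where F: "C \<in> M" "F \<in> M" "is_proj F" "norm (C o\<^sub>L F) \<le> e2" "Re (\<tau> (id_blinfun - F)) \<le> d2"
    using C unfolding meas_nbhd_def by blast
  obtain G where G: "G \<in> M" "is_proj G" "\<forall>x. E (G x) = G x" "\<forall>x. F (G x) = G x"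
    "Re (\<tau> (id_blinfun - G)) \<le> Re (\<tau> (id_blinfun - E)) + Re (\<tau> (id_blinfun - F))"
    using meet[OF E(2,3) F(2,3)] by blast
  have e1: "e1 \<ge> 0" using E(4) norm_ge_zero order_trans by blast
  have e2: "e2 \<ge> 0" using F(4) norm_ge_zero order_trans by blast
  have "norm ((B + C) o\<^sub>L G) \<le> e1 + e2"
  proof (rule norm_blinfun_bound)
    show "0 \<le> e1 + e2" using e1 e2 by simp
    fix x
    have "((B + C) o\<^sub>L G) x = (B o\<^sub>L E) (G x) + (C o\<^sub>L F) (G x)" using G(3,4) by (simp add: blinfun.add_left)
    then have "norm (((B + C) o\<^sub>L G) x) \<le> norm ((B o\<^sub>L E) (G x)) + norm ((C o\<^sub>L F) (G x))"
      by (metis norm_triangle_ineq)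
    also have "\<dots> \<le> e1 * norm (G x) + e2 * norm (G x)"
    proof -
      have "norm ((B o\<^sub>L E) (G x)) \<le> norm (B o\<^sub>L E) * norm (G x)" by (rule norm_blinfun)
      also have "\<dots> \<le> e1 * norm (G x)" using E(4) by (simp add: mult_right_mono)
      finally have a: "norm ((B o\<^sub>L E) (G x)) \<le> e1 * norm (G x)" .
      have "norm ((C o\<^sub>L F) (G x)) \<le> norm (C o\<^sub>L F) * norm (G x)" by (rule norm_blinfun)
      also have "\<dots> \<le> e2 * norm (G x)" using F(4) by (simp add: mult_right_mono)
      finally show ?thesis using a by linarith
    qed
    also have "\<dots> = (e1 + e2) * norm (G x)" by (simp add: algebra_simps)
    also have "\<dots> \<le> (e1 + e2) * norm x" using proj_norm_le[OF G(2)] e1 e2 by (simp add: mult_left_mono)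
    finally show "norm (((B + C) o\<^sub>L G) x) \<le> (e1 + e2) * norm x" .
  qed
  moreover have "B + C \<in> M" using E(1) F(1) by (rule M_add)
  moreover have "Re (\<tau> (id_blinfun - G)) \<le> d1 + d2" using G(5) E(5) F(5) by linarith
  ultimately show ?thesis unfolding meas_nbhd_def using G(1,2) by blast
qed

lemma zero_nbhd: "e \<ge> 0 \<Longrightarrow> d \<ge> 0 \<Longrightarrow> 0 \<in> meas_nbhd M \<tau> e d"
  unfolding meas_nbhd_def using M_zero M_id id_is_proj tau_zero by (intro CollectI conjI bexI[of _ id_blinfun]) auto

lemma open_kernel:
  assumes A: "A \<in> M" and e: "\<epsilon> > 0" and d: "\<delta> > 0"
  shows "\<exists>V. openin (meas_topology M \<tau>) V \<and> A \<in> V \<and> V \<subseteq> (\<lambda>B. A + B) ` meas_nbhd M \<tau> \<epsilon> \<delta>"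
proof -
  let ?N = "meas_nbhd M \<tau>"
  define V where "V = {C \<in> M. \<exists>\<eta>>0. \<exists>\<kappa>>0. (\<lambda>B. C + B) ` ?N \<eta> \<kappa> \<subseteq> (\<lambda>B. A + B) ` ?N \<epsilon> \<delta>}"
  have "openin (meas_topology M \<tau>) V"
    unfolding openin_meas
  proof (intro conjI ballI)
    show "V \<subseteq> M" unfolding V_def by blast
    fix C assume "C \<in> V"
    then obtain \<eta> \<kappa> where C: "C \<in> M" "\<eta> > 0" "\<kappa> > 0" "(\<lambda>B. C + B) ` ?N \<eta> \<kappa> \<subseteq> (\<lambda>B. A + B) ` ?N \<epsilon> \<delta>"
      unfolding V_def by blast
    have "(\<lambda>B. C + B) ` ?N (\<eta>/2) (\<kappa>/2) \<subseteq> V"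
    proof
      fix Y assume "Y \<in> (\<lambda>B. C + B) ` ?N (\<eta>/2) (\<kappa>/2)"
      then obtain D where D: "D \<in> ?N (\<eta>/2) (\<kappa>/2)" "Y = C + D" by blast
      have DM: "D \<in> M" using D(1) unfolding meas_nbhd_def by blast
      have "(\<lambda>B. Y + B) ` ?N (\<eta>/2) (\<kappa>/2) \<subseteq> (\<lambda>B. A + B) ` ?N \<epsilon> \<delta>"
      proof
        fix Z assume "Z \<in> (\<lambda>B. Y + B) ` ?N (\<eta>/2) (\<kappa>/2)"
        then obtain B where B: "B \<in> ?N (\<eta>/2) (\<kappa>/2)" "Z = Y + B" by blast
        have "D + B \<in> ?N (\<eta>/2 + \<eta>/2) (\<kappa>/2 + \<kappa>/2)" by (rule nbhd_add[OF D(1) B(1)])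
        then have "D + B \<in> ?N \<eta> \<kappa>" by simp
        then have "C + (D + B) \<in> (\<lambda>B. C + B) ` ?N \<eta> \<kappa>" by blast
        then show "Z \<in> (\<lambda>B. A + B) ` ?N \<epsilon> \<delta>" using C(4) B(2) D(2) by (auto simp: add.assoc)
      qed
      moreover have "Y \<in> M" using D(2) C(1) DM by (simp add: M_add)
      ultimately show "Y \<in> V" unfolding V_def using C(2,3) by (intro CollectI conjI exI[of _ "\<eta>/2"] exI[of _ "\<kappa>/2"]) auto
    qed
    moreover have "\<eta>/2 > 0" "\<kappa>/2 > 0" using C(2,3) by auto
    ultimately show "\<exists>\<epsilon>>0. \<exists>\<delta>>0. (\<lambda>B. C + B) ` ?N \<epsilon> \<delta> \<subseteq> V" by blast
  qed
  moreover have "A \<in> V" unfolding V_def using A e d by blast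
  moreover have "V \<subseteq> (\<lambda>B. A + B) ` ?N \<epsilon> \<delta>"
  proof
    fix C assume "C \<in> V"
    then obtain \<eta> \<kappa> where C: "\<eta> > 0" "\<kappa> > 0" "(\<lambda>B. C + B) ` ?N \<eta> \<kappa> \<subseteq> (\<lambda>B. A + B) ` ?N \<epsilon> \<delta>"
      unfolding V_def by blast
    have "C + 0 \<in> (\<lambda>B. C + B) ` ?N \<eta> \<kappa>" using zero_nbhd C(1,2) by (intro imageI) auto
    then show "C \<in> (\<lambda>B. A + B) ` ?N \<epsilon> \<delta>" using C(3) by auto
  qed
  ultimately show ?thesis by blast
qed

end

lemma dsum_L2: "dsum_norm x = L2_set (\<lambda>i. norm (x i)) UNIV"
  unfolding dsum_norm_def L2_set_def ..

lemma dsum_nonneg: "0 \<le> dsum_norm x"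
  unfolding dsum_L2 by simp

lemma dsum_comp: "norm (x i) \<le> dsum_norm (x :: 'n::finite \<Rightarrow> 'h::{real_inner,complete_space})"
  unfolding dsum_L2 by (rule member_le_L2_set) auto

lemma dsum_le_sum: "dsum_norm (x :: 'n::finite \<Rightarrow> 'h::{real_inner,complete_space}) \<le> (\<Sum>i\<in>UNIV. norm (x i))"
  unfolding dsum_L2 by (rule L2_set_le_sum) simp

lemma dsum_scale: "dsum_norm (\<lambda>i. c *\<^sub>R (x :: 'n::finite \<Rightarrow> 'h::{real_inner,complete_space}) i) = \<bar>c\<bar> * dsum_norm x"
  unfolding dsum_L2 by (simp add: L2_set_right_distrib)

lemma dsum_zero_iff: "dsum_norm (x :: 'n::finite \<Rightarrow> 'h::{real_inner,complete_space}) = 0 \<longleftrightarrow> x = (\<lambda>i. 0)"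
  unfolding dsum_L2 by (auto simp: L2_set_eq_0_iff fun_eq_iff)

lemma dsum_single: "dsum_norm (\<lambda>l::'n::finite. if l = j then v else (0::'h::{real_inner,complete_space})) = norm v"
proof -
  have "(\<Sum>i\<in>UNIV. (norm (if i = j then v else 0))^2) = (norm v)^2"
    by (simp add: if_distrib[of norm] if_distrib[of "\<lambda>x. x^2"] cong: if_cong)
  then show ?thesis unfolding dsum_norm_def by simp
qed

lemma mat_apply_scale: "mat_apply A (\<lambda>i. c *\<^sub>R x i) = (\<lambda>i. c *\<^sub>R mat_apply A x i)"
  unfolding mat_apply_def by (simp add: blinfun.scaleR_right scaleR_sum_right)

lemma mat_apply_zero: "mat_apply A (\<lambda>i. 0) = (\<lambda>i. 0)"
  unfolding mat_apply_def by simp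

lemma mat_apply_bound:
  fixes A :: "('n::finite, 'h::{real_inner,complete_space}) opmat"
  shows "dsum_norm (mat_apply A x) \<le> (\<Sum>i\<in>UNIV. \<Sum>j\<in>UNIV. norm (A (i, j))) * dsum_norm x"
proof -
  have "norm (mat_apply A x i) \<le> (\<Sum>j\<in>UNIV. norm (A (i, j))) * dsum_norm x" for i
  proof -
    have "norm (mat_apply A x i) \<le> (\<Sum>j\<in>UNIV. norm (A (i, j) (x j)))"
      unfolding mat_apply_def by (rule norm_sum)
    also have "\<dots> \<le> (\<Sum>j\<in>UNIV. norm (A (i, j)) * dsum_norm x)"
    proof (rule sum_mono)
      fix j
      have "norm (A (i, j) (x j)) \<le> norm (A (i, j)) * norm (x j)" by (rule norm_blinfun)
      also have "\<dots> \<le> norm (A (i, j)) * dsum_norm x" by (intro mult_left_mono dsum_comp) simp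
      finally show "norm (A (i, j) (x j)) \<le> norm (A (i, j)) * dsum_norm x" .
    qed
    also have "\<dots> = (\<Sum>j\<in>UNIV. norm (A (i, j))) * dsum_norm x" by (simp add: sum_distrib_right)
    finally show ?thesis .
  qed
  then have "(\<Sum>i\<in>UNIV. norm (mat_apply A x i)) \<le> (\<Sum>i\<in>UNIV. (\<Sum>j\<in>UNIV. norm (A (i, j))) * dsum_norm x)"
    by (intro sum_mono)
  then show ?thesis using dsum_le_sum[of "mat_apply A x"] by (simp add: sum_distrib_right)
qed

lemma mat_norm_bdd:
  fixes A :: "('n::finite, 'h::{real_inner,complete_space}) opmat"
  shows "bdd_above {dsum_norm (mat_apply A x) | x. dsum_norm x \<le> 1}"
proof (rule bdd_aboveI)
  fix r assume "r \<in> {dsum_norm (mat_apply A x) | x. dsum_norm x \<le> 1}"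
  then obtain x where x: "r = dsum_norm (mat_apply A x)" "dsum_norm x \<le> 1" by blast
  have "r \<le> (\<Sum>i\<in>UNIV. \<Sum>j\<in>UNIV. norm (A (i, j))) * dsum_norm x" using x mat_apply_bound by simp
  also have "\<dots> \<le> (\<Sum>i\<in>UNIV. \<Sum>j\<in>UNIV. norm (A (i, j))) * 1"
    using x(2) by (intro mult_left_mono) (simp_all add: sum_nonneg)
  finally show "r \<le> (\<Sum>i\<in>UNIV. \<Sum>j\<in>UNIV. norm (A (i, j)))" by simp
qed

lemma mat_norm_ge:
  fixes A :: "('n::finite, 'h::{real_inner,complete_space}) opmat"
  assumes "dsum_norm x \<le> 1"
  shows "dsum_norm (mat_apply A x) \<le> mat_norm A"
  unfolding mat_norm_def by (rule cSup_upper[OF _ mat_norm_bdd]) (use assms in blast)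

lemma mat_norm_le:
  fixes A :: "('n::finite, 'h::{real_inner,complete_space}) opmat"
  assumes "\<And>x. dsum_norm x \<le> 1 \<Longrightarrow> dsum_norm (mat_apply A x) \<le> c"
  shows "mat_norm A \<le> c"
  unfolding mat_norm_def
proof (rule cSup_least)
  have "dsum_norm (\<lambda>i::'n. 0::'h) \<le> 1" using dsum_zero_iff[of "\<lambda>i::'n. 0::'h"] by simp
  then show "{dsum_norm (mat_apply A x) | x. dsum_norm x \<le> 1} \<noteq> {}" by blast
  fix r assume "r \<in> {dsum_norm (mat_apply A x) | x. dsum_norm x \<le> 1}"
  then show "r \<le> c" using assms by blast
qed

lemma mat_norm_apply:
  fixes A :: "('n::finite, 'h::{real_inner,complete_space}) opmat"
  shows "dsum_norm (mat_apply A x) \<le> mat_norm A * dsum_norm x"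
proof (cases "dsum_norm x = 0")
  case True
  then have "x = (\<lambda>i. 0)" by (simp add: dsum_zero_iff)
  moreover have "0 \<le> mat_norm A"
    using mat_norm_ge[of "\<lambda>i. 0" A] dsum_zero_iff[of "\<lambda>i::'n. 0::'h"] mat_apply_zero[of A] by simp
  ultimately show ?thesis using mat_apply_zero[of A] dsum_zero_iff[of "\<lambda>i::'n. 0::'h"] by simp
next
  case False
  define d where "d = dsum_norm x"
  have d0: "d > 0" using False dsum_nonneg[of x] unfolding d_def by simp
  define x' where "x' = (\<lambda>i. (1 / d) *\<^sub>R x i)"
  have "dsum_norm x' = 1" unfolding x'_def dsum_scale using d0 unfolding d_def by simp
  then have "dsum_norm (mat_apply A x') \<le> mat_norm A" by (intro mat_norm_ge) simp
  moreover have "dsum_norm (mat_apply A x') = dsum_norm (mat_apply A x) / d"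
    unfolding x'_def mat_apply_scale dsum_scale using d0 by simp
  ultimately show ?thesis using d0 unfolding d_def by (simp add: divide_le_eq)
qed

lemma mat_apply_mult:
  "mat_apply (mat_mult A B) x = mat_apply A (mat_apply B x)"
  unfolding mat_apply_def mat_mult_def
  by (auto simp: fun_eq_iff blinfun.sum_left blinfun.sum_right intro: sum.swap)

context vnt
begin

lemma M_uminus: "A \<in> M \<Longrightarrow> - A \<in> M"
  using M_scaleR[of A "-1"] by simp

lemma M_sum: "finite S \<Longrightarrow> (\<forall>i\<in>S. A i \<in> M) \<Longrightarrow> (\<Sum>i\<in>S. A i) \<in> M"
  by (induction S rule: finite_induct) (auto intro: M_add M_zero)

lemma tau_sum: "finite S \<Longrightarrow> (\<forall>i\<in>S. A i \<in> M) \<Longrightarrow> \<tau> (\<Sum>i\<in>S. A i) = (\<Sum>i\<in>S. \<tau> (A i))"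
proof (induction S rule: finite_induct)
  case empty then show ?case by (simp add: tau_zero)
next
  case (insert a S)
  then have "\<tau> (A a + (\<Sum>i\<in>S. A i)) = \<tau> (A a) + \<tau> (\<Sum>i\<in>S. A i)"
    by (intro tau_add M_sum) auto
  then show ?case using insert by simp
qed

lemma X1:
  fixes B :: "('n::finite, 'h) opmat"
  assumes B: "B \<in> mat_meas_nbhd M \<tau> \<epsilon> \<delta>"
  shows "B (i, j) \<in> meas_nbhd M \<tau> \<epsilon> (real CARD('n) * \<delta>)"
proof -
  obtain E where BM: "B \<in> mat_alg M" and EM: "E \<in> mat_alg M" and Ep: "mat_is_proj E"
    and BE: "mat_norm (mat_mult B E) \<le> \<epsilon>" and Etr: "Re (mat_trace \<tau> (\<lambda>ij. mat_id ij - E ij)) \<le> \<delta>"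
    using B unfolding mat_meas_nbhd_def by blast
  have EM': "\<And>k l. E (k, l) \<in> M" using EM unfolding mat_alg_def by blast
  have BM': "\<And>k l. B (k, l) \<in> M" using BM unfolding mat_alg_def by blast
  have Eadj: "adj (E (k, l)) = E (l, k)" for k l
  proof -
    have "mat_adj E (l, k) = E (l, k)" using Ep unfolding mat_is_proj_def by simp
    then show ?thesis unfolding mat_adj_def by simp
  qed
  have Emult: "(\<Sum>m\<in>UNIV. E (k, m) (E (m, l) x)) = E (k, l) x" for k l x
  proof -
    have "mat_mult E E (k, l) = E (k, l)" using Ep unfolding mat_is_proj_def by simp
    then have "(\<Sum>m\<in>UNIV. E (k, m) o\<^sub>L E (m, l)) x = E (k, l) x" unfolding mat_mult_def by simp
    then show ?thesis by (simp add: blinfun.sum_left)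
  qed
  define Q where "Q = (\<lambda>k l. mat_id (k, l) - E (k, l))"
  have Qapp: "Q k l x = (if k = l then x else 0) - E (k, l) x" for k l x
    unfolding Q_def mat_id_def by (simp add: blinfun.diff_left)
  have QM: "Q k l \<in> M" for k l
    unfolding Q_def mat_id_def using M_id M_zero EM' by (auto intro: M_diff M_uminus)
  have Qadj: "adj (Q k l) = Q l k" for k l
    unfolding Q_def mat_id_def using Eadj by (auto simp: adj_diff)
  have Qmult_app: "(\<Sum>l\<in>UNIV. Q k l (Q l m x)) = Q k m x" for k m x
  proof -
    have "(\<Sum>l\<in>UNIV. Q k l (Q l m x)) = (\<Sum>l\<in>UNIV. (if k = l then Q l m x else 0) - E (k, l) (Q l m x))"
      by (intro sum.cong refl) (rule Qapp[of k])
    also have "\<dots> = Q k m x - (\<Sum>l\<in>UNIV. E (k, l) (Q l m x))"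
      by (simp add: sum_subtractf)
    also have "(\<Sum>l\<in>UNIV. E (k, l) (Q l m x)) = (\<Sum>l\<in>UNIV. (if l = m then E (k, l) x else 0) - E (k, l) (E (l, m) x))"
      by (intro sum.cong) (auto simp: Qapp blinfun.diff_right)
    also have "\<dots> = E (k, m) x - E (k, m) x" by (simp add: sum_subtractf Emult)
    finally show ?thesis by simp
  qed
  have Qmult: "Q k m = (\<Sum>l\<in>UNIV. Q k l o\<^sub>L Q l m)" for k m
    by (rule blinfun_eqI) (simp add: blinfun.sum_left Qmult_app)
  have Qinner: "inner (Q j j x) x = (\<Sum>l\<in>UNIV. (norm (Q l j x))^2)" for j x
  proof -
    have "inner (Q j j x) x = (\<Sum>l\<in>UNIV. inner (Q j l (Q l j x)) x)"
      by (simp only: Qmult_app[of j j x, symmetric] inner_sum_left)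
    also have "\<dots> = (\<Sum>l\<in>UNIV. inner (Q l j x) (Q l j x))"
      by (intro sum.cong refl) (simp add: adj_inner Qadj)
    finally show ?thesis by (simp add: power2_norm_eq_inner)
  qed
  have Qpos: "pos_op (Q j j)" for j
    unfolding pos_op_def using Qadj Qinner by (auto intro: sum_nonneg)
  define F where "F = kerp (Q j j)"
  have FM: "F \<in> M" unfolding F_def by (rule kerp_M[OF QM])
  have Fp: "is_proj F" unfolding F_def by (rule kerp_is_proj)
  have mn0: "0 \<le> mat_norm (mat_mult B E)"
    using mat_norm_ge[of "\<lambda>i::'n. 0::'h" "mat_mult B E"] dsum_zero_iff[of "\<lambda>i::'n. 0::'h"] mat_apply_zero[of "mat_mult B E"]
    by simp
  have e0: "\<epsilon> \<ge> 0" using mn0 BE by linarith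
  have normA: "norm (B (i, j) o\<^sub>L F) \<le> \<epsilon>"
  proof (rule norm_blinfun_bound[OF e0])
    fix x
    define y where "y = F x"
    have "Q j j y = 0" unfolding y_def F_def by (rule kerp_ker)
    then have "(\<Sum>l\<in>UNIV. (norm (Q l j y))^2) = 0" using Qinner[of j y] by simp
    then have "\<forall>l\<in>UNIV. (norm (Q l j y))^2 = 0" by (subst sum_nonneg_eq_0_iff[symmetric]) auto
    then have Ely: "E (l, j) y = (if l = j then y else 0)" for l using Qapp[of l j y] by auto
    define v where "v = (\<lambda>l::'n. if l = j then y else 0)"
    have Ev: "mat_apply E v = v"
    proof
      fix l
      have "mat_apply E v l = (\<Sum>m\<in>UNIV. if m = j then E (l, m) y else 0)"
        unfolding mat_apply_def v_def by (intro sum.cong refl) auto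
      also have "\<dots> = E (l, j) y" by simp
      finally show "mat_apply E v l = v l" using Ely unfolding v_def by simp
    qed
    have "mat_apply (mat_mult B E) v i = mat_apply B v i" by (simp add: mat_apply_mult Ev)
    also have "\<dots> = (\<Sum>m\<in>UNIV. if m = j then B (i, m) y else 0)"
      unfolding mat_apply_def v_def by (intro sum.cong refl) auto
    also have "\<dots> = B (i, j) y" by simp
    finally have "B (i, j) y = mat_apply (mat_mult B E) v i" by simp
    then have "norm (B (i, j) y) \<le> dsum_norm (mat_apply (mat_mult B E) v)" by (simp add: dsum_comp)
    also have "\<dots> \<le> mat_norm (mat_mult B E) * dsum_norm v" by (rule mat_norm_apply)
    also have "dsum_norm v = norm y" unfolding v_def by (rule dsum_single)
    also have "mat_norm (mat_mult B E) * norm y \<le> \<epsilon> * norm x"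
      using BE mn0 proj_norm_le[OF Fp, of x] e0 unfolding y_def by (intro mult_mono) auto
    finally show "norm ((B (i, j) o\<^sub>L F) x) \<le> \<epsilon> * norm x" unfolding y_def by simp
  qed
  have trB: "Re (\<tau> (id_blinfun - F)) \<le> (\<Sum>l\<in>UNIV. Re (\<tau> (Q l l)))"
    unfolding F_def
  proof (rule supp_le[OF QM[of j j] Qpos[of j]])
    fix e :: real assume e: "e > 0"
    let ?X = "Q j j"
    let ?R = "res ?X e"
    have RM: "?R \<in> M" by (rule res_M[OF QM[of j j] Qpos[of j] e])
    have "?X o\<^sub>L ?R = (\<Sum>l\<in>UNIV. Q j l o\<^sub>L (Q l j o\<^sub>L ?R))"
      by (subst Qmult) (simp add: bounded_bilinear.sum_left[OF bounded_bilinear_blinfun_compose] comp_assoc_L)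
    then have "\<tau> (?X o\<^sub>L ?R) = (\<Sum>l\<in>UNIV. \<tau> (Q j l o\<^sub>L (Q l j o\<^sub>L ?R)))"
      using tau_sum[of UNIV "\<lambda>l. Q j l o\<^sub>L (Q l j o\<^sub>L ?R)"] QM RM by (simp add: M_comp)
    also have "\<dots> = (\<Sum>l\<in>UNIV. \<tau> ((Q l j o\<^sub>L ?R) o\<^sub>L Q j l))"
      by (intro sum.cong refl tau_comm QM M_comp RM)
    finally have "Re (\<tau> (?X o\<^sub>L ?R)) = (\<Sum>l\<in>UNIV. Re (\<tau> ((Q l j o\<^sub>L ?R) o\<^sub>L Q j l)))" by simp
    also have "\<dots> \<le> (\<Sum>l\<in>UNIV. Re (\<tau> (Q l l)))"
    proof (rule sum_mono)
      fix l
      have "op_le ((Q l j o\<^sub>L ?R) o\<^sub>L Q j l) (Q l l)"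
      proof (rule op_leI)
        show "adj ((Q l j o\<^sub>L ?R) o\<^sub>L Q j l) = (Q l j o\<^sub>L ?R) o\<^sub>L Q j l"
          by (simp add: adj_comp Qadj res_adj[OF QM[of j j] Qpos[of j] e] comp_assoc_L)
        show "adj (Q l l) = Q l l" by (rule Qadj)
        fix x
        define z where "z = Q j l x"
        define w where "w = ?R z"
        have z: "z = ?X w + e *\<^sub>R w" unfolding w_def using res_r[OF QM[of j j] Qpos[of j] e, of z] by simp
        have "inner (((Q l j o\<^sub>L ?R) o\<^sub>L Q j l) x) x = inner w z"
          unfolding w_def z_def by (simp add: adj_inner Qadj)
        also have "\<dots> = 2 * inner z w - inner (?X w) w - e * inner w w"
        proof -
          have "inner w z = inner w (?X w) + e * inner w w" by (subst z) (simp add: inner_add_right)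
          then show ?thesis by (simp add: inner_commute)
        qed
        also have "\<dots> \<le> 2 * inner z w - inner (?X w) w" using e by simp
        also have "inner (?X w) w = (\<Sum>m\<in>UNIV. (norm (Q m j w))^2)" by (rule Qinner)
        also have "inner z w = (\<Sum>m\<in>UNIV. inner (Q m l x) (Q m j w))"
        proof -
          have "inner z w = inner x (Q l j w)" unfolding z_def by (simp add: adj_inner Qadj)
          also have "\<dots> = (\<Sum>m\<in>UNIV. inner x (Q l m (Q m j w)))" by (simp only: Qmult_app[of l j w, symmetric] inner_sum_right)
          also have "\<dots> = (\<Sum>m\<in>UNIV. inner (Q m l x) (Q m j w))"
            by (intro sum.cong refl) (simp add: adj_inner2[symmetric] Qadj)
          finally show ?thesis .
        qed
        also have "2 * (\<Sum>m\<in>UNIV. inner (Q m l x) (Q m j w)) - (\<Sum>m\<in>UNIV. (norm (Q m j w))^2)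
                   \<le> (\<Sum>m\<in>UNIV. (norm (Q m l x))^2)"
        proof -
          have "(\<Sum>m\<in>UNIV. 2 * inner (Q m l x) (Q m j w) - (norm (Q m j w))^2) \<le> (\<Sum>m\<in>UNIV. (norm (Q m l x))^2)"
          proof (rule sum_mono)
            fix m
            have "0 \<le> inner (Q m l x - Q m j w) (Q m l x - Q m j w)" by simp
            then show "2 * inner (Q m l x) (Q m j w) - (norm (Q m j w))^2 \<le> (norm (Q m l x))^2"
              by (simp add: inner_diff_left inner_diff_right inner_commute power2_norm_eq_inner)
          qed
          then show ?thesis by (simp add: sum_subtractf sum_distrib_left)
        qed
        also have "(\<Sum>m\<in>UNIV. (norm (Q m l x))^2) = inner (Q l l x) x" by (rule Qinner[symmetric])
        finally show "inner (((Q l j o\<^sub>L ?R) o\<^sub>L Q j l) x) x \<le> inner (Q l l x) x" .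
      qed
      then show "Re (\<tau> ((Q l j o\<^sub>L ?R) o\<^sub>L Q j l)) \<le> Re (\<tau> (Q l l))"
        by (intro tau_mono M_comp QM RM)
    qed
    finally show "Re (\<tau> (?X o\<^sub>L ?R)) \<le> (\<Sum>l\<in>UNIV. Re (\<tau> (Q l l)))" .
  qed
  have "(\<Sum>l\<in>UNIV. Re (\<tau> (Q l l))) = real CARD('n) * Re (mat_trace \<tau> (\<lambda>ij. mat_id ij - E ij))"
  proof -
    have "mat_trace \<tau> (\<lambda>ij. mat_id ij - E ij) = (\<Sum>l\<in>UNIV. \<tau> (Q l l)) / of_nat CARD('n)"
      unfolding mat_trace_def Q_def ..
    then have "(\<Sum>l\<in>UNIV. \<tau> (Q l l)) = of_nat CARD('n) * mat_trace \<tau> (\<lambda>ij. mat_id ij - E ij)"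
      by simp
    then show ?thesis by (simp add: Re_sum[symmetric])
  qed
  also have "\<dots> \<le> real CARD('n) * \<delta>" using Etr by (intro mult_left_mono) auto
  finally have "Re (\<tau> (id_blinfun - F)) \<le> real CARD('n) * \<delta>" using trB by linarith
  then show ?thesis unfolding meas_nbhd_def using BM' FM Fp normA by blast
qed

end

context vnt
begin

lemma X2:
  fixes B :: "('n::finite, 'h) opmat"
  assumes e: "\<epsilon> > 0" and d: "\<delta> > 0"
    and B: "\<And>ij. B ij \<in> meas_nbhd M \<tau> (\<epsilon> / (real CARD('n))^2) (\<delta> / (real CARD('n))^2)"
  shows "B \<in> mat_meas_nbhd M \<tau> \<epsilon> \<delta>"
proof -
  define n where "n = real CARD('n)"
  have n0: "n > 0" unfolding n_def by simp
  define e' where "e' = \<epsilon> / n^2"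
  define d' where "d' = \<delta> / n^2"
  have "\<forall>ij. \<exists>E. E \<in> M \<and> is_proj E \<and> norm (B ij o\<^sub>L E) \<le> e' \<and> Re (\<tau> (id_blinfun - E)) \<le> d'"
    using B unfolding meas_nbhd_def e'_def d'_def n_def by blast
  then obtain E where E: "\<And>ij. E ij \<in> M" "\<And>ij. is_proj (E ij)" "\<And>ij. norm (B ij o\<^sub>L E ij) \<le> e'"
    "\<And>ij. Re (\<tau> (id_blinfun - E ij)) \<le> d'" by metis
  have BM: "\<And>ij. B ij \<in> M" using B unfolding meas_nbhd_def by blast
  obtain G where G: "G \<in> M" "is_proj G" "\<forall>ij\<in>UNIV. \<forall>x. E ij (G x) = G x"
    "Re (\<tau> (id_blinfun - G)) \<le> (\<Sum>ij\<in>UNIV. Re (\<tau> (id_blinfun - E ij)))"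
    using meet_fin[of "UNIV :: ('n \<times> 'n) set" E] E(1,2) by auto
  have GG: "G o\<^sub>L G = G" "adj G = G" using G(2) unfolding is_proj_def by auto
  define D :: "('n, 'h) opmat" where "D = (\<lambda>(i, j). if i = j then G else 0)"
  have Dij: "D (i, j) = (if i = j then G else 0)" for i j unfolding D_def by simp
  have DM: "D \<in> mat_alg M" unfolding mat_alg_def D_def using G(1) M_zero by auto
  have Dp: "mat_is_proj D"
    unfolding mat_is_proj_def
  proof
    show "mat_mult D D = D"
    proof
      fix ik :: "'n \<times> 'n"
      obtain i k where ik: "ik = (i, k)" by fastforce
      have "(\<Sum>j\<in>UNIV. D (i, j) o\<^sub>L D (j, k)) = (\<Sum>j\<in>UNIV. if j = i then D (i, k) else 0)"
        by (intro sum.cong refl) (auto simp: Dij GG)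
      also have "\<dots> = D (i, k)" by simp
      finally show "mat_mult D D ik = D ik" unfolding mat_mult_def ik by simp
    qed
    show "mat_adj D = D"
      unfolding mat_adj_def by (auto simp: fun_eq_iff Dij GG)
  qed
  have e'0: "e' \<ge> 0" unfolding e'_def using e by simp
  have norm: "mat_norm (mat_mult B D) \<le> \<epsilon>"
  proof (rule mat_norm_le)
    fix x :: "'n \<Rightarrow> 'h" assume x: "dsum_norm x \<le> 1"
    have Dx: "mat_apply D x = (\<lambda>j. G (x j))"
    proof
      fix j
      have "mat_apply D x j = (\<Sum>k\<in>UNIV. if k = j then G (x k) else 0)"
        unfolding mat_apply_def by (intro sum.cong refl) (auto simp: Dij)
      then show "mat_apply D x j = G (x j)" by simp
    qed
    have comp: "norm (mat_apply (mat_mult B D) x i) \<le> n * e'" for i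
    proof -
      have "mat_apply (mat_mult B D) x i = mat_apply B (mat_apply D x) i" by (simp add: mat_apply_mult)
      also have "\<dots> = (\<Sum>j\<in>UNIV. B (i, j) (G (x j)))" unfolding Dx by (simp add: mat_apply_def)
      also have "\<dots> = (\<Sum>j\<in>UNIV. (B (i, j) o\<^sub>L E (i, j)) (G (x j)))" using G(3) by simp
      finally have "mat_apply (mat_mult B D) x i = (\<Sum>j\<in>UNIV. (B (i, j) o\<^sub>L E (i, j)) (G (x j)))" .
      then have "norm (mat_apply (mat_mult B D) x i) \<le> (\<Sum>j\<in>UNIV. norm ((B (i, j) o\<^sub>L E (i, j)) (G (x j))))"
        by (simp add: norm_sum)
      also have "\<dots> \<le> (\<Sum>j\<in>(UNIV::'n set). e')"
      proof (rule sum_mono)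
        fix j
        have "norm ((B (i, j) o\<^sub>L E (i, j)) (G (x j))) \<le> norm (B (i, j) o\<^sub>L E (i, j)) * norm (G (x j))"
          by (rule norm_blinfun)
        also have "\<dots> \<le> e' * 1"
        proof (rule mult_mono)
          show "norm (B (i, j) o\<^sub>L E (i, j)) \<le> e'" by (rule E(3))
          have "norm (G (x j)) \<le> norm (x j)" by (rule proj_norm_le[OF G(2)])
          also have "\<dots> \<le> dsum_norm x" by (rule dsum_comp)
          finally show "norm (G (x j)) \<le> 1" using x by linarith
        qed (use e'0 in auto)
        finally show "norm ((B (i, j) o\<^sub>L E (i, j)) (G (x j))) \<le> e'" by simp
      qed
      also have "\<dots> = n * e'" unfolding n_def by simp
      finally show ?thesis .
    qed
    have "dsum_norm (mat_apply (mat_mult B D) x) \<le> (\<Sum>i\<in>UNIV. norm (mat_apply (mat_mult B D) x i))"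
      by (rule dsum_le_sum)
    also have "\<dots> \<le> (\<Sum>i\<in>(UNIV::'n set). n * e')" by (rule sum_mono) (rule comp)
    also have "\<dots> = n * (n * e')" unfolding n_def by simp
    also have "\<dots> = \<epsilon>" unfolding e'_def using n0 by (simp add: power2_eq_square)
    finally show "dsum_norm (mat_apply (mat_mult B D) x) \<le> \<epsilon>" .
  qed
  have tr: "Re (mat_trace \<tau> (\<lambda>ij. mat_id ij - D ij)) \<le> \<delta>"
  proof -
    have "mat_trace \<tau> (\<lambda>ij. mat_id ij - D ij) = (\<Sum>i\<in>(UNIV::'n set). \<tau> (id_blinfun - G)) / of_nat CARD('n)"
      unfolding mat_trace_def by (simp add: mat_id_def Dij)
    also have "\<dots> = \<tau> (id_blinfun - G)" by simp
    finally have "Re (mat_trace \<tau> (\<lambda>ij. mat_id ij - D ij)) = Re (\<tau> (id_blinfun - G))" by simp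
    also have "\<dots> \<le> (\<Sum>ij\<in>(UNIV::('n \<times> 'n) set). Re (\<tau> (id_blinfun - E ij)))" by (rule G(4))
    also have "\<dots> \<le> (\<Sum>ij\<in>(UNIV::('n \<times> 'n) set). d')" by (rule sum_mono) (rule E(4))
    also have "\<dots> = n * n * d'" proof -
      have "CARD('n \<times> 'n) = CARD('n) * CARD('n)"
        by (simp add: card_cartesian_product flip: UNIV_Times_UNIV)
      then show ?thesis unfolding n_def by simp
    qed
    also have "\<dots> = \<delta>" unfolding d'_def using n0 by (simp add: power2_eq_square)
    finally show ?thesis .
  qed
  have "B \<in> mat_alg M" unfolding mat_alg_def using BM by blast
  then show ?thesis unfolding mat_meas_nbhd_def using DM Dp norm tr by blast
qed

lemma mat_meas_nbhd_mono: "e \<le> e' \<Longrightarrow> d \<le> d' \<Longrightarrow> mat_meas_nbhd M \<tau> e d \<subseteq> mat_meas_nbhd M \<tau> e' d'"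
  unfolding mat_meas_nbhd_def by fastforce

end

lemma openin_mat:
  "openin (mat_meas_topology M \<tau> :: ('n::finite, 'h::{real_inner,complete_space}) opmat topology) U \<longleftrightarrow>
     U \<subseteq> mat_alg M \<and> (\<forall>A\<in>U. \<exists>\<epsilon>>0. \<exists>\<delta>>0. (\<lambda>B ij. A ij + B ij) ` mat_meas_nbhd M \<tau> \<epsilon> \<delta> \<subseteq> U)"
proof -
  have mono: "\<And>e d e' d'. e \<le> e' \<Longrightarrow> d \<le> d' \<Longrightarrow> (mat_meas_nbhd M \<tau> e d :: ('n, 'h) opmat set) \<subseteq> mat_meas_nbhd M \<tau> e' d'"
    unfolding mat_meas_nbhd_def by fastforce
  have "istopology (\<lambda>U. U \<subseteq> (mat_alg M :: ('n, 'h) opmat set) \<and> (\<forall>A\<in>U. \<exists>\<epsilon>>0. \<exists>\<delta>>0. (\<lambda>B ij. A ij + B ij) ` mat_meas_nbhd M \<tau> \<epsilon> \<delta> \<subseteq> U))"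
    by (rule nbhd_istop[OF mono])
  then show ?thesis unfolding mat_meas_topology_def by simp
qed

lemma PiE_UNIV_iff: "f \<in> Pi\<^sub>E UNIV S \<longleftrightarrow> (\<forall>i. f i \<in> S i)"
  by (simp add: PiE_iff)

context vnt
begin

lemma topspace_meas: "topspace (meas_topology M \<tau>) = M"
proof -
  have "openin (meas_topology M \<tau>) M"
    unfolding openin_meas
  proof (intro conjI ballI)
    show "M \<subseteq> M" by simp
    fix A assume A: "A \<in> M"
    have "(\<lambda>B. A + B) ` meas_nbhd M \<tau> 1 1 \<subseteq> M" unfolding meas_nbhd_def using A M_add by auto
    moreover have "(1::real) > 0" by simp
    ultimately show "\<exists>\<epsilon>>0. \<exists>\<delta>>0. (\<lambda>B. A + B) ` meas_nbhd M \<tau> \<epsilon> \<delta> \<subseteq> M" by blast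
  qed
  then have "M \<subseteq> topspace (meas_topology M \<tau>)" by (rule openin_subset)
  moreover have "topspace (meas_topology M \<tau>) \<subseteq> M"
    using openin_topspace[of "meas_topology M \<tau>"] unfolding openin_meas by blast
  ultimately show ?thesis by blast
qed

lemma main_eq:
  "product_topology (\<lambda>_::'n::finite \<times> 'n. meas_topology M \<tau>) UNIV
     = (mat_meas_topology M \<tau> :: ('n, 'h) opmat topology)"
proof -
  let ?PT = "product_topology (\<lambda>_::'n \<times> 'n. meas_topology M \<tau>) UNIV"
  let ?MT = "mat_meas_topology M \<tau> :: ('n, 'h) opmat topology"
  define n where "n = real CARD('n)"
  have n0: "n > 0" unfolding n_def by simp
  have top: "topspace ?PT = mat_alg M"
    by (auto simp: topspace_meas mat_alg_def PiE_iff)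
  have "openin ?PT S \<longleftrightarrow> openin ?MT S" for S
  proof
    assume S: "openin ?PT S"
    show "openin ?MT S"
      unfolding openin_mat
    proof (intro conjI ballI)
      show "S \<subseteq> mat_alg M" using openin_subset[OF S] top by simp
      fix A assume A: "A \<in> S"
      obtain U where U: "\<forall>i\<in>UNIV. openin (meas_topology M \<tau>) (U i)" "A \<in> Pi\<^sub>E UNIV U" "Pi\<^sub>E UNIV U \<subseteq> S"
        using S A unfolding openin_product_topology_alt by blast
      have "\<forall>ij. \<exists>\<epsilon>. \<epsilon> > 0 \<and> (\<exists>\<delta>>0. (\<lambda>B. A ij + B) ` meas_nbhd M \<tau> \<epsilon> \<delta> \<subseteq> U ij)"
      proof
        fix ij
        have "A ij \<in> U ij" using U(2) unfolding PiE_UNIV_iff by blast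
        then show "\<exists>\<epsilon>. \<epsilon> > 0 \<and> (\<exists>\<delta>>0. (\<lambda>B. A ij + B) ` meas_nbhd M \<tau> \<epsilon> \<delta> \<subseteq> U ij)"
          using U(1) unfolding openin_meas by blast
      qed
      then obtain ef where "\<forall>ij. ef ij > 0 \<and> (\<exists>\<delta>>0. (\<lambda>B. A ij + B) ` meas_nbhd M \<tau> (ef ij) \<delta> \<subseteq> U ij)"
        by metis
      then obtain df where ed: "\<And>ij. ef ij > 0" "\<And>ij. df ij > 0"
        "\<And>ij. (\<lambda>B. A ij + B) ` meas_nbhd M \<tau> (ef ij) (df ij) \<subseteq> U ij"
        by metis
      define e0 where "e0 = Min (range ef)"
      define d0 where "d0 = Min (range df)"
      have e0: "e0 > 0" "\<And>ij. e0 \<le> ef ij" unfolding e0_def using ed(1) by auto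
      have d0: "d0 > 0" "\<And>ij. d0 \<le> df ij" unfolding d0_def using ed(2) by auto
      have "(\<lambda>B ij. A ij + B ij) ` mat_meas_nbhd M \<tau> e0 (d0 / n) \<subseteq> S"
      proof
        fix C assume "C \<in> (\<lambda>B ij. A ij + B ij) ` mat_meas_nbhd M \<tau> e0 (d0 / n)"
        then obtain B where B: "B \<in> mat_meas_nbhd M \<tau> e0 (d0 / n)" "C = (\<lambda>ij. A ij + B ij)" by blast
        have "C ij \<in> U ij" for ij
        proof -
          obtain i j where ij: "ij = (i, j)" by fastforce
          have "B (i, j) \<in> meas_nbhd M \<tau> e0 (n * (d0 / n))" using X1[OF B(1), of i j] unfolding n_def .
          then have "B ij \<in> meas_nbhd M \<tau> e0 d0" using n0 ij by simp
          then have "B ij \<in> meas_nbhd M \<tau> (ef ij) (df ij)" using meas_nbhd_mono[OF e0(2) d0(2)] by blast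
          then show ?thesis using ed(3)[of ij] B(2) by auto
        qed
        then have "C \<in> Pi\<^sub>E UNIV U" unfolding PiE_UNIV_iff by blast
        then show "C \<in> S" using U(3) by blast
      qed
      moreover have "d0 / n > 0" using d0 n0 by simp
      ultimately show "\<exists>\<epsilon>>0. \<exists>\<delta>>0. (\<lambda>B ij. A ij + B ij) ` mat_meas_nbhd M \<tau> \<epsilon> \<delta> \<subseteq> S"
        using e0(1) by blast
    qed
  next
    assume S: "openin ?MT S"
    have SM: "S \<subseteq> mat_alg M" and Sn: "\<forall>A\<in>S. \<exists>\<epsilon>>0. \<exists>\<delta>>0. (\<lambda>B ij. A ij + B ij) ` mat_meas_nbhd M \<tau> \<epsilon> \<delta> \<subseteq> S"
      using S unfolding openin_mat by auto
    show "openin ?PT S"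
      unfolding openin_product_topology_alt
    proof
      fix A assume A: "A \<in> S"
      obtain \<epsilon> \<delta> where ed: "\<epsilon> > 0" "\<delta> > 0" "(\<lambda>B ij. A ij + B ij) ` mat_meas_nbhd M \<tau> \<epsilon> \<delta> \<subseteq> S"
        using Sn A by blast
      define e' where "e' = \<epsilon> / n^2"
      define d' where "d' = \<delta> / n^2"
      have e': "e' > 0" unfolding e'_def using ed n0 by simp
      have d': "d' > 0" unfolding d'_def using ed n0 by simp
      have AM: "A ij \<in> M" for ij using A SM unfolding mat_alg_def by blast
      have "\<forall>ij. \<exists>V. openin (meas_topology M \<tau>) V \<and> A ij \<in> V \<and> V \<subseteq> (\<lambda>B. A ij + B) ` meas_nbhd M \<tau> e' d'"
        using open_kernel[OF AM e' d'] by blast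
      then obtain V where V: "\<And>ij. openin (meas_topology M \<tau>) (V ij)" "\<And>ij. A ij \<in> V ij"
        "\<And>ij. V ij \<subseteq> (\<lambda>B. A ij + B) ` meas_nbhd M \<tau> e' d'" by metis
      have "Pi\<^sub>E UNIV V \<subseteq> S"
      proof
        fix C assume C: "C \<in> Pi\<^sub>E UNIV V"
        define B where "B = (\<lambda>ij. C ij - A ij)"
        have "B ij \<in> meas_nbhd M \<tau> (\<epsilon> / n^2) (\<delta> / n^2)" for ij
        proof -
          have "C ij \<in> (\<lambda>B. A ij + B) ` meas_nbhd M \<tau> e' d'" using C V(3) unfolding PiE_UNIV_iff by blast
          then obtain b where "b \<in> meas_nbhd M \<tau> e' d'" "C ij = A ij + b" by blast
          then show ?thesis unfolding B_def e'_def d'_def by simp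
        qed
        then have "B \<in> mat_meas_nbhd M \<tau> \<epsilon> \<delta>" unfolding n_def by (intro X2 ed(1,2))
        then have "(\<lambda>ij. A ij + B ij) \<in> S" using ed(3) by blast
        moreover have "(\<lambda>ij. A ij + B ij) = C" unfolding B_def by simp
        ultimately show "C \<in> S" by simp
      qed
      moreover have "A \<in> Pi\<^sub>E UNIV V" using V(2) unfolding PiE_UNIV_iff by blast
      ultimately show "\<exists>U. finite {i \<in> UNIV. U i \<noteq> topspace (meas_topology M \<tau>)} \<and>
                 (\<forall>i\<in>UNIV. openin (meas_topology M \<tau>) (U i)) \<and> A \<in> Pi\<^sub>E UNIV U \<and> Pi\<^sub>E UNIV U \<subseteq> S"
        using V(1) by (intro exI[of _ V]) auto
    qed
  qed
  then show ?thesis by (simp add: topology_eq)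
qed

end

theorem proposition4p3:
  fixes J :: "'h::{real_inner,complete_space} \<Rightarrow>\<^sub>L 'h"
    and M :: "('h \<Rightarrow>\<^sub>L 'h) set"
    and \<tau> :: "('h \<Rightarrow>\<^sub>L 'h) \<Rightarrow> complex"
  assumes "II1_factor J M"
    and "faithful_normal_tracial_state J M \<tau>"
  shows "product_topology (\<lambda>_::'n::finite \<times> 'n. meas_topology M \<tau>) UNIV
           = (mat_meas_topology M \<tau> :: ('n, 'h) opmat topology)"
proof -
  have cs: "complex_structure J" and fa: "factor J M" using assms(1) unfolding II1_factor_def by auto
  have vn: "von_neumann_algebra J M" using fa unfolding factor_def by auto
  interpret vnt J M \<tau> using cs vn assms(2) by unfold_locales
  show ?thesis by (rule main_eq)
qed

end
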